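(* For every finite multiset $\Gamma$ and formulas $\varphi,\chi$: if both $\Gamma\Rightarrow\varphi$ and $\varphi,\Gamma\Rightarrow\chi$ are provable in $\mathsf{G4iSLt}$, then $\Gamma\Rightarrow\chi$ is provable in $\mathsf{G4iSLt}$.
   Context: Formulas are built by the grammar $\varphi ::= p \mid \bot \mid \varphi\land\varphi \mid \varphi\lor\varphi \mid \varphi\to\varphi \mid \Box\varphi$, with $p$ ranging over a countably infinite set of propositional variables. For a multiset $\Gamma$, $\Box\Gamma=\{\Box\psi:\psi\in\Gamma\}$; a boxed formula is one of the form $\Box\psi$. A sequent is $\Gamma\Rightarrow\chi$ with $\Gamma$ a finite multiset of formulas and $\chi$ a formula. The sequent calculus $\mathsf{G4iSLt}$ has the following rules, where $p$ is a propositional variable and $\Phi$ always denotes a multiset containing no boxed formula: (⊥L) $\bot,\Gamma\Rightarrow\chi$ (no premise); (IdP) $\Gamma,p\Rightarrow p$ (no premise); (∧L) from $\Gamma,\varphi,\psi\Rightarrow\chi$ infer $\Gamma,\varphi\land\psi\Rightarrow\chi$; (∧R) from $\Gamma\Rightarrow\varphi$ and $\Gamma\Rightarrow\psi$ infer $\Gamma\Rightarrow\varphi\land\psi$; (∨L) from $\Gamma,\varphi\Rightarrow\chi$ and $\Gamma,\psi\Rightarrow\chi$ infer $\Gamma,\varphi\lor\psi\Rightarrow\chi$; (∨R$_i$), $i\in\{1,2\}$: from $\Gamma\Rightarrow\varphi_i$ infer $\Gamma\Rightarrow\varphi_1\lor\varphi_2$; (p→L) from $\Gamma,p,\varphi\Rightarrow\chi$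 infer $\Gamma,p,p\to\varphi\Rightarrow\chi$; (→R) from $\Gamma,\varphi\Rightarrow\psi$ infer $\Gamma\Rightarrow\varphi\to\psi$; (□→L) from $\Phi,\Gamma,\psi,\Box\varphi\Rightarrow\varphi$ and $\Phi,\Box\Gamma,\psi\Rightarrow\chi$ infer $\Phi,\Box\Gamma,\Box\varphi\to\psi\Rightarrow\chi$; (SLtR) from $\Phi,\Gamma,\Box\varphi\Rightarrow\varphi$ infer $\Phi,\Box\Gamma\Rightarrow\Box\varphi$; (∧→L) from $\Gamma,\varphi\to(\psi\to\chi)\Rightarrow\delta$ infer $\Gamma,(\varphi\land\psi)\to\chi\Rightarrow\delta$; (∨→L) from $\Gamma,\varphi\to\chi,\psi\to\chi\Rightarrow\delta$ infer $\Gamma,(\varphi\lor\psi)\to\chi\Rightarrow\delta$; (→→L) from $\Gamma,\psi\to\chi\Rightarrow\varphi\to\psi$ and $\Gamma,\chi\Rightarrow\delta$ infer $\Gamma,(\varphi\to\psi)\to\chi\Rightarrow\delta$. A proof of a sequent $S$ is a finite tree of sequents with root $S$ in which each interior node together with its children forms an instance of a rule (conclusion, premises) and each leaf is the conclusion of a premise-free rule; $S$ is provable if it has a proof. *)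

theory Defs
  imports Main "HOL-Library.Multiset"
begin

datatype form =
    Var nat
  | Bot
  | And form form
  | Or form form
  | Imp form form
  | Box form

fun is_box :: "form \<Rightarrow> bool" where
  "is_box (Box _) = True"
| "is_box _ = False"

definition no_box :: "form multiset \<Rightarrow> bool" where
  "no_box \<Phi> \<longleftrightarrow> (\<forall>x \<in># \<Phi>. \<not> is_box x)"

abbreviation boxes :: "form multiset \<Rightarrow> form multiset" where
  "boxes \<Gamma> \<equiv> image_mset Box \<Gamma>"

inductive G4iSLt :: "form multiset \<Rightarrow> form \<Rightarrow> bool" where
  BotL: "G4iSLt (add_mset Bot \<Gamma>) \<chi>"
| IdP: "G4iSLt (add_mset (Var p) \<Gamma>) (Var p)"
| AndL: "G4iSLt (add_mset \<phi> (add_mset \<psi> \<Gamma>)) \<chi> \<Longrightarrow>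
         G4iSLt (add_mset (And \<phi> \<psi>) \<Gamma>) \<chi>"
| AndR: "G4iSLt \<Gamma> \<phi> \<Longrightarrow> G4iSLt \<Gamma> \<psi> \<Longrightarrow> G4iSLt \<Gamma> (And \<phi> \<psi>)"
| OrL: "G4iSLt (add_mset \<phi> \<Gamma>) \<chi> \<Longrightarrow> G4iSLt (add_mset \<psi> \<Gamma>) \<chi> \<Longrightarrow>
        G4iSLt (add_mset (Or \<phi> \<psi>) \<Gamma>) \<chi>"
| OrR1: "G4iSLt \<Gamma> \<phi> \<Longrightarrow> G4iSLt \<Gamma> (Or \<phi> \<psi>)"
| OrR2: "G4iSLt \<Gamma> \<psi> \<Longrightarrow> G4iSLt \<Gamma> (Or \<phi> \<psi>)"
| PImpL: "G4iSLt (add_mset (Var p) (add_mset \<phi> \<Gamma>)) \<chi> \<Longrightarrow>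
          G4iSLt (add_mset (Var p) (add_mset (Imp (Var p) \<phi>) \<Gamma>)) \<chi>"
| ImpR: "G4iSLt (add_mset \<phi> \<Gamma>) \<psi> \<Longrightarrow> G4iSLt \<Gamma> (Imp \<phi> \<psi>)"
| BoxImpL: "no_box \<Phi> \<Longrightarrow>
            G4iSLt (\<Phi> + \<Gamma> + {#\<psi>, Box \<phi>#}) \<phi> \<Longrightarrow>
            G4iSLt (\<Phi> + boxes \<Gamma> + {#\<psi>#}) \<chi> \<Longrightarrow>
            G4iSLt (\<Phi> + boxes \<Gamma> + {#Imp (Box \<phi>) \<psi>#}) \<chi>"
| SLtR: "no_box \<Phi> \<Longrightarrow>
         G4iSLt (\<Phi> + \<Gamma> + {#Box \<phi>#}) \<phi> \<Longrightarrow>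
         G4iSLt (\<Phi> + boxes \<Gamma>) (Box \<phi>)"
| AndImpL: "G4iSLt (add_mset (Imp \<phi> (Imp \<psi> \<chi>)) \<Gamma>) \<delta> \<Longrightarrow>
            G4iSLt (add_mset (Imp (And \<phi> \<psi>) \<chi>) \<Gamma>) \<delta>"
| OrImpL: "G4iSLt (add_mset (Imp \<phi> \<chi>) (add_mset (Imp \<psi> \<chi>) \<Gamma>)) \<delta> \<Longrightarrow>
           G4iSLt (add_mset (Imp (Or \<phi> \<psi>) \<chi>) \<Gamma>) \<delta>"
| ImpImpL: "G4iSLt (add_mset (Imp \<psi> \<chi>) \<Gamma>) (Imp \<phi> \<psi>) \<Longrightarrow>
            G4iSLt (add_mset \<chi> \<Gamma>) \<delta> \<Longrightarrow>
            G4iSLt (add_mset (Imp (Imp \<phi> \<psi>) \<chi>) \<Gamma>) \<delta>"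

end

theory Submission
  imports Defs "HOL-Library.Multiset_Order"
begin


fun w :: "form \<Rightarrow> nat" where
  "w (Var p) = 1" | "w Bot = 1" | "w (And a b) = w a + w b + 2"
| "w (Or a b) = w a + w b + 1" | "w (Imp a b) = w a + w b + 1" | "w (Box a) = w a + 1"

lemma w_pos[simp]: "w a > 0" by (cases a) auto

definition f :: "form \<Rightarrow> nat" where "f a = 2 * w a + 1"
definition g :: "form \<Rightarrow> nat" where "g a = 2 * w a"

definition mu :: "form multiset \<Rightarrow> form \<Rightarrow> nat multiset" where
  "mu G c = image_mset g G + {#f c#}"

definition Kc :: "form \<Rightarrow> form multiset \<Rightarrow> form \<Rightarrow> nat multiset" where
  "Kc A G c = mu G c + mu G c + {#f A, f A, g A#}"

lemma dom: "J \<noteq> {#} \<Longrightarrow> \<forall>k\<in>#K. \<exists>j\<in>#J. k < j \<Longrightarrow> (K::nat multiset) < J"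
  using one_step_implies_multp[of J K "(<)" "{#}"] by (simp add: less_multiset_def)

lemma add_mset_mono2: "(a::nat) \<le> b \<Longrightarrow> A \<le> B \<Longrightarrow> add_mset a A \<le> add_mset b B"
proof -
  assume "a \<le> b" "A \<le> B"
  then have "A + {#a#} \<le> B + {#b#}" by (intro add_mono) auto
  then show ?thesis by simp
qed

lemma gbox_le: "image_mset g D \<le> image_mset g (image_mset Box D)"
  by (induction D) (auto intro!: add_mset_mono2 simp: g_def)

lemma ltI: "X \<le> Y \<Longrightarrow> K < J \<Longrightarrow> X + K < Y + (J::nat multiset)"
  by (rule add_le_less_mono)

lemma Kc_mono: "mu G' c' < mu G c \<Longrightarrow> Kc A G' c' < Kc A G c"
  unfolding Kc_def by (intro add_strict_right_mono add_strict_mono)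

lemma d_AndL: "mu (add_mset a (add_mset b G)) c < mu (add_mset (And a b) G) c"
  unfolding mu_def by (simp add: g_def f_def)
lemma d_AndR1: "mu G a < mu G (And a b)"
  unfolding mu_def by (simp add: f_def)
lemma d_AndR2: "mu G b < mu G (And a b)"
  unfolding mu_def by (simp add: f_def)
lemma d_OrL1: "mu (add_mset a G) c < mu (add_mset (Or a b) G) c"
  unfolding mu_def by (simp add: g_def)
lemma d_OrL2: "mu (add_mset b G) c < mu (add_mset (Or a b) G) c"
  unfolding mu_def by (simp add: g_def)
lemma d_OrR1: "mu G a < mu G (Or a b)"
  unfolding mu_def by (simp add: f_def)
lemma d_OrR2: "mu G b < mu G (Or a b)"
  unfolding mu_def by (simp add: f_def)
lemma d_PImpL: "mu (add_mset (Var p) (add_mset a G)) c < mu (add_mset (Var p) (add_mset (Imp (Var p) a) G)) c"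
  unfolding mu_def by (simp add: g_def)
lemma d_ImpR: "mu (add_mset a G) b < mu G (Imp a b)"
  unfolding mu_def by (simp add: g_def f_def)
lemma d_AndImpL: "mu (add_mset (Imp a (Imp b c)) G) d < mu (add_mset (Imp (And a b) c) G) d"
  unfolding mu_def by (simp add: g_def)
lemma d_OrImpL: "mu (add_mset (Imp a c) (add_mset (Imp b c) G)) d < mu (add_mset (Imp (Or a b) c) G) d"
  unfolding mu_def by (simp add: g_def f_def)
lemma d_ImpImpL1: "mu (add_mset (Imp b c) G) (Imp a b) < mu (add_mset (Imp (Imp a b) c) G) d"
  unfolding mu_def apply (simp add: g_def f_def) apply (rule dom) apply auto done
lemma d_ImpImpL2: "mu (add_mset c G) d < mu (add_mset (Imp (Imp a b) c) G) d"
  unfolding mu_def by (simp add: g_def)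
lemma d_BoxImpL1: "mu (P + D + {#b, Box a#}) a < mu (P + image_mset Box D + {#Imp (Box a) b#}) c"
proof -
  have "image_mset g D + {#g b, g (Box a), f a#} < image_mset g (image_mset Box D) + {#g (Imp (Box a) b), f c#}"
    by (rule ltI[OF gbox_le], rule dom) (auto simp: g_def f_def)
  then show ?thesis unfolding mu_def by (simp add: ac_simps add_mset_commute)
qed
lemma d_BoxImpL2: "mu (P + D + {#b#}) c < mu (P + D + {#Imp (Box a) b#}) c"
  unfolding mu_def by (simp add: g_def)
lemma d_SLtR: "mu (P + D + {#Box a#}) a < mu (P + image_mset Box D) (Box a)"
proof -
  have "image_mset g D + {#g (Box a), f a#} < image_mset g (image_mset Box D) + {#f (Box a)#}"
    by (rule ltI[OF gbox_le], rule dom) (auto simp: g_def f_def)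
  then show ?thesis unfolding mu_def by (simp add: ac_simps add_mset_commute)
qed

fun unbox :: "form \<Rightarrow> form" where
  "unbox (Box a) = a" | "unbox x = x"

lemma unbox_boxes[simp]: "image_mset unbox (image_mset Box D) = D"
  by (induction D) auto

lemma no_box_empty[simp]: "no_box {#}" by (simp add: no_box_def)
lemma no_box_add[simp]: "no_box (A + B) \<longleftrightarrow> no_box A \<and> no_box B"
  by (auto simp: no_box_def)
lemma no_box_add_mset[simp]: "no_box (add_mset x A) \<longleftrightarrow> \<not> is_box x \<and> no_box A"
  by (auto simp: no_box_def)
lemma no_box_diff: "no_box A \<Longrightarrow> no_box (A - B)"
  by (auto simp: no_box_def dest: in_diffD)

lemma is_box_iff: "is_box x \<longleftrightarrow> (\<exists>a. x = Box a)"
  by (cases x) auto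

lemma boxes_unbox: "image_mset Box (image_mset unbox (filter_mset is_box G)) = filter_mset is_box G"
  by (induction G) (auto simp: is_box_iff)

lemma split_ctx: "\<exists>P D. no_box P \<and> G = P + image_mset Box D"
proof -
  let ?P = "filter_mset (\<lambda>x. \<not> is_box x) G"
  let ?D = "image_mset unbox (filter_mset is_box G)"
  have "G = filter_mset is_box G + ?P" by (rule multiset_partition)
  moreover have "no_box ?P" by (auto simp: no_box_def)
  ultimately show ?thesis using boxes_unbox[of G] by (metis add.commute)
qed

lemma boxes_eq: "image_mset Box D1 = image_mset Box D2 \<Longrightarrow> D1 = D2"
  by (metis unbox_boxes)

lemma fnb: "no_box P \<Longrightarrow> filter_mset (\<lambda>x. \<not> is_box x) (P + image_mset Box D) = P"
proof -
  assume "no_box P"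
  then have "filter_mset (\<lambda>x. \<not> is_box x) P = P" by (induction P) auto
  moreover have "filter_mset (\<lambda>x. \<not> is_box x) (image_mset Box D) = {#}" by (induction D) auto
  ultimately show ?thesis by simp
qed

lemma fb: "no_box P \<Longrightarrow> filter_mset is_box (P + image_mset Box D) = image_mset Box D"
proof -
  assume "no_box P"
  then have "filter_mset is_box P = {#}" by (induction P) auto
  moreover have "filter_mset is_box (image_mset Box D) = image_mset Box D" by (induction D) auto
  ultimately show ?thesis by simp
qed

lemma decomp_unique: "no_box P1 \<Longrightarrow> no_box P2 \<Longrightarrow> P1 + image_mset Box D1 = P2 + image_mset Box D2 \<Longrightarrow> P1 = P2 \<and> D1 = D2"
  by (metis fnb fb boxes_eq)

lemma dec_nb: "no_box P \<Longrightarrow> P + image_mset Box D = add_mset X G \<Longrightarrow> \<not> is_box X \<Longrightarrow>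
   X \<in># P \<and> G = (P - {#X#}) + image_mset Box D"
proof -
  assume a: "no_box P" "P + image_mset Box D = add_mset X G" "\<not> is_box X"
  then have "X \<in># P + image_mset Box D" by simp
  with a(3) have "X \<in># P" by auto
  then obtain P' where P': "P = add_mset X P'" by (metis multi_member_split)
  with a(2) show ?thesis by simp
qed

lemma dec_b: "no_box P \<Longrightarrow> P + image_mset Box D = add_mset (Box x) G \<Longrightarrow>
   x \<in># D \<and> G = P + image_mset Box (D - {#x#})"
proof -
  assume a: "no_box P" "P + image_mset Box D = add_mset (Box x) G"
  then have "Box x \<in># P + image_mset Box D" by simp
  moreover have "Box x \<notin># P" using a(1) by (auto simp: no_box_def)
  ultimately have "x \<in># D" by auto
  then obtain D' where D': "D = add_mset x D'" by (metis multi_member_split)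
  with a(2) show ?thesis by simp
qed



lemma nb_box: "\<not> is_box A \<Longrightarrow> no_box P \<Longrightarrow> no_box (add_mset A P)" by simp

lemma wk: "G4iSLt G c \<Longrightarrow> G4iSLt (add_mset A G) c"
proof (induction arbitrary: A rule: G4iSLt.induct)
  case (BotL \<Gamma> \<chi>) then show ?case by (metis G4iSLt.BotL add_mset_commute)
next
  case (IdP p \<Gamma>) then show ?case by (metis G4iSLt.IdP add_mset_commute)
next
  case (AndL \<phi> \<psi> \<Gamma> \<chi>)
  have "G4iSLt (add_mset \<phi> (add_mset \<psi> (add_mset A \<Gamma>))) \<chi>" using AndL.IH[of A] by (simp add: add_mset_commute)
  from G4iSLt.AndL[OF this] show ?case by (simp add: add_mset_commute)
next
  case (AndR \<Gamma> \<phi> \<psi>) then show ?case by (simp add: G4iSLt.AndR)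
next
  case (OrL \<phi> \<Gamma> \<chi> \<psi>)
  have "G4iSLt (add_mset \<phi> (add_mset A \<Gamma>)) \<chi>" "G4iSLt (add_mset \<psi> (add_mset A \<Gamma>)) \<chi>"
    using OrL.IH[of A] by (simp_all add: add_mset_commute)
  from G4iSLt.OrL[OF this] show ?case by (simp add: add_mset_commute)
next
  case (OrR1 \<Gamma> \<phi> \<psi>) then show ?case by (simp add: G4iSLt.OrR1)
next
  case (OrR2 \<Gamma> \<psi> \<phi>) then show ?case by (simp add: G4iSLt.OrR2)
next
  case (PImpL p \<phi> \<Gamma> \<chi>)
  have "G4iSLt (add_mset (Var p) (add_mset \<phi> (add_mset A \<Gamma>))) \<chi>" using PImpL.IH[of A] by (simp add: add_mset_commute)
  from G4iSLt.PImpL[OF this] show ?case by (simp add: add_mset_commute)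
next
  case (ImpR \<phi> \<Gamma> \<psi>)
  have "G4iSLt (add_mset \<phi> (add_mset A \<Gamma>)) \<psi>" using ImpR.IH[of A] by (simp add: add_mset_commute)
  from G4iSLt.ImpR[OF this] show ?case .
next
  case (BoxImpL \<Phi> \<Gamma> \<psi> \<phi> \<chi>)
  show ?case
  proof (cases "is_box A")
    case True
    then obtain a where A: "A = Box a" by (auto simp: is_box_iff)
    have 1: "G4iSLt (\<Phi> + add_mset a \<Gamma> + {#\<psi>, Box \<phi>#}) \<phi>" using BoxImpL.IH(1)[of a] by (simp add: add_mset_commute)
    have 2: "G4iSLt (\<Phi> + image_mset Box (add_mset a \<Gamma>) + {#\<psi>#}) \<chi>" using BoxImpL.IH(2)[of A] A by (simp add: add_mset_commute)
    from G4iSLt.BoxImpL[OF BoxImpL.hyps(1) 1 2] show ?thesis using A by (simp add: add_mset_commute)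
  next
    case False
    have 1: "G4iSLt (add_mset A \<Phi> + \<Gamma> + {#\<psi>, Box \<phi>#}) \<phi>" using BoxImpL.IH(1)[of A] by (simp add: add_mset_commute)
    have 2: "G4iSLt (add_mset A \<Phi> + image_mset Box \<Gamma> + {#\<psi>#}) \<chi>" using BoxImpL.IH(2)[of A] by (simp add: add_mset_commute)
    from G4iSLt.BoxImpL[OF nb_box[OF False BoxImpL.hyps(1)] 1 2] show ?thesis by (simp add: add_mset_commute)
  qed
next
  case (SLtR \<Phi> \<Gamma> \<phi>)
  show ?case
  proof (cases "is_box A")
    case True
    then obtain a where A: "A = Box a" by (auto simp: is_box_iff)
    have 1: "G4iSLt (\<Phi> + add_mset a \<Gamma> + {#Box \<phi>#}) \<phi>" using SLtR.IH[of a] by (simp add: add_mset_commute)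
    from G4iSLt.SLtR[OF SLtR.hyps(1) 1] show ?thesis using A by (simp add: add_mset_commute)
  next
    case False
    have 1: "G4iSLt (add_mset A \<Phi> + \<Gamma> + {#Box \<phi>#}) \<phi>" using SLtR.IH[of A] by (simp add: add_mset_commute)
    from G4iSLt.SLtR[OF nb_box[OF False SLtR.hyps(1)] 1] show ?thesis by (simp add: add_mset_commute)
  qed
next
  case (AndImpL \<phi> \<psi> \<chi> \<Gamma> \<delta>)
  have "G4iSLt (add_mset (Imp \<phi> (Imp \<psi> \<chi>)) (add_mset A \<Gamma>)) \<delta>" using AndImpL.IH[of A] by (simp add: add_mset_commute)
  from G4iSLt.AndImpL[OF this] show ?case by (simp add: add_mset_commute)
next
  case (OrImpL \<phi> \<chi> \<psi> \<Gamma> \<delta>)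
  have "G4iSLt (add_mset (Imp \<phi> \<chi>) (add_mset (Imp \<psi> \<chi>) (add_mset A \<Gamma>))) \<delta>" using OrImpL.IH[of A] by (simp add: add_mset_commute)
  from G4iSLt.OrImpL[OF this] show ?case by (simp add: add_mset_commute)
next
  case (ImpImpL \<psi> \<chi> \<Gamma> \<phi> \<delta>)
  have "G4iSLt (add_mset (Imp \<psi> \<chi>) (add_mset A \<Gamma>)) (Imp \<phi> \<psi>)" "G4iSLt (add_mset \<chi> (add_mset A \<Gamma>)) \<delta>"
    using ImpImpL.IH[of A] by (simp_all add: add_mset_commute)
  from G4iSLt.ImpImpL[OF this] show ?case by (simp add: add_mset_commute)
qed

lemma wk_mset: "G4iSLt G c \<Longrightarrow> G4iSLt (H + G) c"
  by (induction H) (auto intro: wk)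

lemma ex_split: "add_mset P \<Gamma> = add_mset X H \<Longrightarrow> P \<noteq> X \<Longrightarrow> \<exists>K. \<Gamma> = add_mset X K \<and> H = add_mset P K"
  by (auto simp: add_eq_conv_ex)

lemma bu: "G4iSLt G c \<Longrightarrow> G = add_mset (Box a) H \<Longrightarrow> G4iSLt (add_mset a H) c"
proof (induction arbitrary: a H rule: G4iSLt.induct)
  case (BotL \<Gamma> \<chi>)
  obtain K where K: "H = add_mset Bot K" using BotL.prems ex_split[of Bot \<Gamma> "Box a" H] by auto
  show ?case using K by (metis G4iSLt.BotL add_mset_commute)
next
  case (IdP p \<Gamma>)
  obtain K where K: "H = add_mset (Var p) K" using IdP.prems ex_split[of "Var p" \<Gamma> "Box a" H] by auto
  show ?case using K by (metis G4iSLt.IdP add_mset_commute)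
next
  case (AndL \<phi> \<psi> \<Gamma> \<chi>)
  obtain K where K: "\<Gamma> = add_mset (Box a) K" "H = add_mset (And \<phi> \<psi>) K"
    using AndL.prems ex_split[of "And \<phi> \<psi>" \<Gamma> "Box a" H] by auto
  have "G4iSLt (add_mset a (add_mset \<phi> (add_mset \<psi> K))) \<chi>"
    using AndL.IH[of a "add_mset \<phi> (add_mset \<psi> K)"] K by (simp add: add_mset_commute)
  then have "G4iSLt (add_mset \<phi> (add_mset \<psi> (add_mset a K))) \<chi>" by (simp add: add_mset_commute)
  from G4iSLt.AndL[OF this] show ?case using K by (simp add: add_mset_commute)
next
  case (AndR \<Gamma> \<phi> \<psi>) then show ?case by (simp add: G4iSLt.AndR)
next
  case (OrL \<phi> \<Gamma> \<chi> \<psi>)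
  obtain K where K: "\<Gamma> = add_mset (Box a) K" "H = add_mset (Or \<phi> \<psi>) K"
    using OrL.prems ex_split[of "Or \<phi> \<psi>" \<Gamma> "Box a" H] by auto
  have "G4iSLt (add_mset a (add_mset \<phi> K)) \<chi>" "G4iSLt (add_mset a (add_mset \<psi> K)) \<chi>"
    using OrL.IH(1)[of a "add_mset \<phi> K"] OrL.IH(2)[of a "add_mset \<psi> K"] K by (simp_all add: add_mset_commute)
  then have "G4iSLt (add_mset \<phi> (add_mset a K)) \<chi>" "G4iSLt (add_mset \<psi> (add_mset a K)) \<chi>" by (simp_all add: add_mset_commute)
  from G4iSLt.OrL[OF this] show ?case using K by (simp add: add_mset_commute)
next
  case (OrR1 \<Gamma> \<phi> \<psi>) then show ?case by (simp add: G4iSLt.OrR1)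
next
  case (OrR2 \<Gamma> \<psi> \<phi>) then show ?case by (simp add: G4iSLt.OrR2)
next
  case (PImpL p \<phi> \<Gamma> \<chi>)
  obtain K1 where K1: "add_mset (Imp (Var p) \<phi>) \<Gamma> = add_mset (Box a) K1" "H = add_mset (Var p) K1"
    using PImpL.prems ex_split[of "Var p" _ "Box a" H] by auto
  obtain K where K: "\<Gamma> = add_mset (Box a) K" "K1 = add_mset (Imp (Var p) \<phi>) K"
    using K1(1) ex_split[of "Imp (Var p) \<phi>" \<Gamma> "Box a" K1] by auto
  have "G4iSLt (add_mset a (add_mset (Var p) (add_mset \<phi> K))) \<chi>"
    using PImpL.IH[of a "add_mset (Var p) (add_mset \<phi> K)"] K by (simp add: add_mset_commute)
  then have "G4iSLt (add_mset (Var p) (add_mset \<phi> (add_mset a K))) \<chi>" by (simp add: add_mset_commute)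
  from G4iSLt.PImpL[OF this] show ?case using K K1 by (simp add: add_mset_commute)
next
  case (ImpR \<phi> \<Gamma> \<psi>)
  have "G4iSLt (add_mset a (add_mset \<phi> H)) \<psi>" using ImpR.IH[of a "add_mset \<phi> H"] ImpR.prems by (simp add: add_mset_commute)
  then have "G4iSLt (add_mset \<phi> (add_mset a H)) \<psi>" by (simp add: add_mset_commute)
  from G4iSLt.ImpR[OF this] show ?case .
next
  case (BoxImpL \<Phi> \<Gamma> \<psi> \<phi> \<chi>)
  have nb: "no_box (add_mset (Imp (Box \<phi>) \<psi>) \<Phi>)" using BoxImpL.hyps(1) by simp
  have "add_mset (Imp (Box \<phi>) \<psi>) \<Phi> + image_mset Box \<Gamma> = add_mset (Box a) H" using BoxImpL.prems by simp
  from dec_b[OF nb this] obtain \<Gamma>' where G': "\<Gamma> = add_mset a \<Gamma>'" and H: "H = add_mset (Imp (Box \<phi>) \<psi>) \<Phi> + image_mset Box \<Gamma>'"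
    by (metis multi_member_split add_mset_remove_trivial)
  show ?case
  proof (cases "is_box a")
    case True
    then obtain a' where a: "a = Box a'" by (auto simp: is_box_iff)
    have 1: "G4iSLt (\<Phi> + add_mset a' \<Gamma>' + {#\<psi>, Box \<phi>#}) \<phi>"
      using BoxImpL.IH(1)[of a' "\<Phi> + \<Gamma>' + {#\<psi>, Box \<phi>#}"] G' a by (simp add: add_mset_commute)
    have 2: "G4iSLt (\<Phi> + image_mset Box (add_mset a' \<Gamma>') + {#\<psi>#}) \<chi>"
      using BoxImpL.IH(2)[of "Box a'" "\<Phi> + image_mset Box \<Gamma>' + {#\<psi>#}"] G' a by (simp add: add_mset_commute)
    from G4iSLt.BoxImpL[OF BoxImpL.hyps(1) 1 2] show ?thesis using H a by (simp add: add_mset_commute)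
  next
    case False
    have 1: "G4iSLt (add_mset a \<Phi> + \<Gamma>' + {#\<psi>, Box \<phi>#}) \<phi>"
      using BoxImpL.hyps(2) G' by (simp add: add_mset_commute)
    have 2: "G4iSLt (add_mset a \<Phi> + image_mset Box \<Gamma>' + {#\<psi>#}) \<chi>"
      using BoxImpL.IH(2)[of a "\<Phi> + image_mset Box \<Gamma>' + {#\<psi>#}"] G' by (simp add: add_mset_commute)
    from G4iSLt.BoxImpL[OF nb_box[OF False BoxImpL.hyps(1)] 1 2] show ?thesis using H by (simp add: add_mset_commute)
  qed
next
  case (SLtR \<Phi> \<Gamma> \<phi>)
  from dec_b[OF SLtR.hyps(1) SLtR.prems] obtain \<Gamma>' where G': "\<Gamma> = add_mset a \<Gamma>'" and H: "H = \<Phi> + image_mset Box \<Gamma>'"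
    by (metis multi_member_split add_mset_remove_trivial)
  show ?case
  proof (cases "is_box a")
    case True
    then obtain a' where a: "a = Box a'" by (auto simp: is_box_iff)
    have 1: "G4iSLt (\<Phi> + add_mset a' \<Gamma>' + {#Box \<phi>#}) \<phi>"
      using SLtR.IH[of a' "\<Phi> + \<Gamma>' + {#Box \<phi>#}"] G' a by (simp add: add_mset_commute)
    from G4iSLt.SLtR[OF SLtR.hyps(1) 1] show ?thesis using H a by (simp add: add_mset_commute)
  next
    case False
    have 1: "G4iSLt (add_mset a \<Phi> + \<Gamma>' + {#Box \<phi>#}) \<phi>"
      using SLtR.hyps(2) G' by (simp add: add_mset_commute)
    from G4iSLt.SLtR[OF nb_box[OF False SLtR.hyps(1)] 1] show ?thesis using H by (simp add: add_mset_commute)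
  qed
next
  case (AndImpL \<phi> \<psi> \<chi> \<Gamma> \<delta>)
  obtain K where K: "\<Gamma> = add_mset (Box a) K" "H = add_mset (Imp (And \<phi> \<psi>) \<chi>) K"
    using AndImpL.prems ex_split[of _ \<Gamma> "Box a" H] by auto
  have "G4iSLt (add_mset a (add_mset (Imp \<phi> (Imp \<psi> \<chi>)) K)) \<delta>"
    using AndImpL.IH[of a "add_mset (Imp \<phi> (Imp \<psi> \<chi>)) K"] K by (simp add: add_mset_commute)
  then have "G4iSLt (add_mset (Imp \<phi> (Imp \<psi> \<chi>)) (add_mset a K)) \<delta>" by (simp add: add_mset_commute)
  from G4iSLt.AndImpL[OF this] show ?case using K by (simp add: add_mset_commute)
next
  case (OrImpL \<phi> \<chi> \<psi> \<Gamma> \<delta>)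
  obtain K where K: "\<Gamma> = add_mset (Box a) K" "H = add_mset (Imp (Or \<phi> \<psi>) \<chi>) K"
    using OrImpL.prems ex_split[of _ \<Gamma> "Box a" H] by auto
  have "G4iSLt (add_mset a (add_mset (Imp \<phi> \<chi>) (add_mset (Imp \<psi> \<chi>) K))) \<delta>"
    using OrImpL.IH[of a "add_mset (Imp \<phi> \<chi>) (add_mset (Imp \<psi> \<chi>) K)"] K by (simp add: add_mset_commute)
  then have "G4iSLt (add_mset (Imp \<phi> \<chi>) (add_mset (Imp \<psi> \<chi>) (add_mset a K))) \<delta>" by (simp add: add_mset_commute)
  from G4iSLt.OrImpL[OF this] show ?case using K by (simp add: add_mset_commute)
next
  case (ImpImpL \<psi> \<chi> \<Gamma> \<phi> \<delta>)
  obtain K where K: "\<Gamma> = add_mset (Box a) K" "H = add_mset (Imp (Imp \<phi> \<psi>) \<chi>) K"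
    using ImpImpL.prems ex_split[of _ \<Gamma> "Box a" H] by auto
  have "G4iSLt (add_mset a (add_mset (Imp \<psi> \<chi>) K)) (Imp \<phi> \<psi>)" "G4iSLt (add_mset a (add_mset \<chi> K)) \<delta>"
    using ImpImpL.IH(1)[of a "add_mset (Imp \<psi> \<chi>) K"] ImpImpL.IH(2)[of a "add_mset \<chi> K"] K by (simp_all add: add_mset_commute)
  then have "G4iSLt (add_mset (Imp \<psi> \<chi>) (add_mset a K)) (Imp \<phi> \<psi>)" "G4iSLt (add_mset \<chi> (add_mset a K)) \<delta>" by (simp_all add: add_mset_commute)
  from G4iSLt.ImpImpL[OF this] show ?case using K by (simp add: add_mset_commute)
qed

lemma bu_mset: "G4iSLt (image_mset Box D + G) c \<Longrightarrow> G4iSLt (D + G) c"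
proof (induction D arbitrary: G)
  case empty then show ?case by simp
next
  case (add x D)
  have "G4iSLt (add_mset x (image_mset Box D + G)) c" using bu[OF add.prems] by simp
  then have "G4iSLt (image_mset Box D + add_mset x G) c" by simp
  from add.IH[OF this] show ?case by simp
qed

lemma lt_le_trans': "(a::nat multiset) < b \<Longrightarrow> b \<le> M \<Longrightarrow> a \<le> M"
  by (meson less_imp_le order.strict_trans2)

context
  fixes X :: form and Y :: "form multiset" and M :: "nat multiset"
  assumes nbX: "\<not> is_box X" and nvX: "\<And>p. X \<noteq> Var p" and nBX: "X \<noteq> Bot"
  and hAnd: "\<And>a b \<Gamma> c. X = And a b \<Longrightarrow> mu (add_mset X \<Gamma>) c \<le> M \<Longrightarrow>
      G4iSLt (add_mset a (add_mset b \<Gamma>)) c \<Longrightarrow> G4iSLt (Y + \<Gamma>) c"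
  and hOr: "\<And>a b \<Gamma> c. X = Or a b \<Longrightarrow> mu (add_mset X \<Gamma>) c \<le> M \<Longrightarrow>
      G4iSLt (add_mset a \<Gamma>) c \<Longrightarrow> G4iSLt (add_mset b \<Gamma>) c \<Longrightarrow> G4iSLt (Y + \<Gamma>) c"
  and hPImp: "\<And>p a \<Gamma> c. X = Imp (Var p) a \<Longrightarrow> mu (add_mset X (add_mset (Var p) \<Gamma>)) c \<le> M \<Longrightarrow>
      G4iSLt (add_mset (Var p) (add_mset a \<Gamma>)) c \<Longrightarrow> G4iSLt (Y + add_mset (Var p) \<Gamma>) c"
  and hAndImp: "\<And>a b d \<Gamma> c. X = Imp (And a b) d \<Longrightarrow> mu (add_mset X \<Gamma>) c \<le> M \<Longrightarrow>
      G4iSLt (add_mset (Imp a (Imp b d)) \<Gamma>) c \<Longrightarrow> G4iSLt (Y + \<Gamma>) c"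
  and hOrImp: "\<And>a b d \<Gamma> c. X = Imp (Or a b) d \<Longrightarrow> mu (add_mset X \<Gamma>) c \<le> M \<Longrightarrow>
      G4iSLt (add_mset (Imp a d) (add_mset (Imp b d) \<Gamma>)) c \<Longrightarrow> G4iSLt (Y + \<Gamma>) c"
  and hImpImp: "\<And>a b d \<Gamma> c. X = Imp (Imp a b) d \<Longrightarrow> mu (add_mset X \<Gamma>) c \<le> M \<Longrightarrow>
      G4iSLt (add_mset (Imp b d) \<Gamma>) (Imp a b) \<Longrightarrow> G4iSLt (add_mset d \<Gamma>) c \<Longrightarrow> G4iSLt (Y + \<Gamma>) c"
  and hBoxImp: "\<And>a b P D c. X = Imp (Box a) b \<Longrightarrow> no_box P \<Longrightarrow> mu (add_mset X (P + image_mset Box D)) c \<le> M \<Longrightarrow>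
      G4iSLt (P + D + {#b, Box a#}) a \<Longrightarrow> G4iSLt (P + image_mset Box D + {#b#}) c \<Longrightarrow>
      G4iSLt (Y + (P + image_mset Box D)) c"
begin

lemma frame_aux: "G4iSLt G c \<Longrightarrow> G = add_mset X \<Gamma> \<Longrightarrow> mu G c \<le> M \<Longrightarrow> G4iSLt (Y + \<Gamma>) c"
proof (induction arbitrary: \<Gamma> rule: G4iSLt.induct)
  case (BotL \<Gamma>0 \<chi>)
  obtain K where K: "\<Gamma> = add_mset Bot K" using BotL.prems(1) ex_split[of Bot \<Gamma>0 X \<Gamma>] nBX by auto
  show ?case using K by (metis G4iSLt.BotL add_mset_commute union_mset_add_mset_right)
next
  case (IdP p \<Gamma>0)
  obtain K where K: "\<Gamma> = add_mset (Var p) K" using IdP.prems(1) ex_split[of "Var p" \<Gamma>0 X \<Gamma>] nvX by auto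
  show ?case using K by (metis G4iSLt.IdP add_mset_commute union_mset_add_mset_right)
next
  case (AndL \<phi> \<psi> \<Gamma>0 \<chi>)
  show ?case
  proof (cases "And \<phi> \<psi> = X")
    case True
    then have "\<Gamma>0 = \<Gamma>" using AndL.prems(1) by simp
    then show ?thesis using hAnd[of \<phi> \<psi> \<Gamma> \<chi>] True AndL.prems AndL.hyps by simp
  next
    case False
    obtain K where K: "\<Gamma>0 = add_mset X K" "\<Gamma> = add_mset (And \<phi> \<psi>) K"
      using AndL.prems(1) ex_split[of _ \<Gamma>0 X \<Gamma>] False by auto
    have b: "mu (add_mset \<phi> (add_mset \<psi> \<Gamma>0)) \<chi> \<le> M" using lt_le_trans'[OF d_AndL AndL.prems(2)] .
    have "G4iSLt (Y + add_mset \<phi> (add_mset \<psi> K)) \<chi>" by (rule AndL.IH[OF _ b]) (simp add: K add_mset_commute)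
    then have "G4iSLt (add_mset \<phi> (add_mset \<psi> (Y + K))) \<chi>" by simp
    from G4iSLt.AndL[OF this] show ?thesis using K by simp
  qed
next
  case (AndR \<Gamma>0 \<phi> \<psi>)
  have "G4iSLt (Y + \<Gamma>) \<phi>" by (rule AndR.IH(1)[OF AndR.prems(1) lt_le_trans'[OF d_AndR1 AndR.prems(2)]])
  moreover have "G4iSLt (Y + \<Gamma>) \<psi>" by (rule AndR.IH(2)[OF AndR.prems(1) lt_le_trans'[OF d_AndR2 AndR.prems(2)]])
  ultimately show ?case by (rule G4iSLt.AndR)
next
  case (OrL \<phi> \<Gamma>0 \<chi> \<psi>)
  show ?case
  proof (cases "Or \<phi> \<psi> = X")
    case True
    then have "\<Gamma>0 = \<Gamma>" using OrL.prems(1) by simp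
    then show ?thesis using hOr[of \<phi> \<psi> \<Gamma> \<chi>] True OrL.prems OrL.hyps by simp
  next
    case False
    obtain K where K: "\<Gamma>0 = add_mset X K" "\<Gamma> = add_mset (Or \<phi> \<psi>) K"
      using OrL.prems(1) ex_split[of _ \<Gamma>0 X \<Gamma>] False by auto
    have b1: "mu (add_mset \<phi> \<Gamma>0) \<chi> \<le> M" using lt_le_trans'[OF d_OrL1 OrL.prems(2)] .
    have b2: "mu (add_mset \<psi> \<Gamma>0) \<chi> \<le> M" using lt_le_trans'[OF d_OrL2 OrL.prems(2)] .
    have "G4iSLt (Y + add_mset \<phi> K) \<chi>" by (rule OrL.IH(1)[OF _ b1]) (simp add: K add_mset_commute)
    moreover have "G4iSLt (Y + add_mset \<psi> K) \<chi>" by (rule OrL.IH(2)[OF _ b2]) (simp add: K add_mset_commute)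
    ultimately have "G4iSLt (add_mset \<phi> (Y + K)) \<chi>" "G4iSLt (add_mset \<psi> (Y + K)) \<chi>" by simp_all
    from G4iSLt.OrL[OF this] show ?thesis using K by simp
  qed
next
  case (OrR1 \<Gamma>0 \<phi> \<psi>)
  have "G4iSLt (Y + \<Gamma>) \<phi>" by (rule OrR1.IH[OF OrR1.prems(1) lt_le_trans'[OF d_OrR1 OrR1.prems(2)]])
  then show ?case by (rule G4iSLt.OrR1)
next
  case (OrR2 \<Gamma>0 \<psi> \<phi>)
  have "G4iSLt (Y + \<Gamma>) \<psi>" by (rule OrR2.IH[OF OrR2.prems(1) lt_le_trans'[OF d_OrR2 OrR2.prems(2)]])
  then show ?case by (rule G4iSLt.OrR2)
next
  case (PImpL p \<phi> \<Gamma>0 \<chi>)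
  obtain K1 where K1: "add_mset (Imp (Var p) \<phi>) \<Gamma>0 = add_mset X K1" "\<Gamma> = add_mset (Var p) K1"
    using PImpL.prems(1) ex_split[of "Var p" _ X \<Gamma>] nvX by auto
  show ?case
  proof (cases "Imp (Var p) \<phi> = X")
    case True
    then have "K1 = \<Gamma>0" using K1 by simp
    then show ?thesis using hPImp[of p \<phi> \<Gamma>0 \<chi>] True PImpL.prems PImpL.hyps K1 by (simp add: add_mset_commute)
  next
    case False
    obtain K where K: "\<Gamma>0 = add_mset X K" "K1 = add_mset (Imp (Var p) \<phi>) K"
      using K1(1) ex_split[of _ \<Gamma>0 X K1] False by auto
    have b: "mu (add_mset (Var p) (add_mset \<phi> \<Gamma>0)) \<chi> \<le> M" using lt_le_trans'[OF d_PImpL PImpL.prems(2)] .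
    have "G4iSLt (Y + add_mset (Var p) (add_mset \<phi> K)) \<chi>" by (rule PImpL.IH[OF _ b]) (simp add: K add_mset_commute)
    then have "G4iSLt (add_mset (Var p) (add_mset \<phi> (Y + K))) \<chi>" by simp
    from G4iSLt.PImpL[OF this] show ?thesis using K K1 by simp
  qed
next
  case (ImpR \<phi> \<Gamma>0 \<psi>)
  have b: "mu (add_mset \<phi> \<Gamma>0) \<psi> \<le> M" using lt_le_trans'[OF d_ImpR ImpR.prems(2)] .
  have "G4iSLt (Y + add_mset \<phi> \<Gamma>) \<psi>" by (rule ImpR.IH[OF _ b]) (simp add: ImpR.prems(1) add_mset_commute)
  then have "G4iSLt (add_mset \<phi> (Y + \<Gamma>)) \<psi>" by simp
  then show ?case by (rule G4iSLt.ImpR)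
next
  case (BoxImpL \<Phi> \<Gamma>0 \<psi> \<phi> \<chi>)
  show ?case
  proof (cases "Imp (Box \<phi>) \<psi> = X")
    case True
    then have "\<Gamma> = \<Phi> + image_mset Box \<Gamma>0" using BoxImpL.prems(1) by simp
    then show ?thesis using hBoxImp[of \<phi> \<psi> \<Phi> \<Gamma>0 \<chi>] True BoxImpL.prems BoxImpL.hyps by simp
  next
    case False
    have nb: "no_box (add_mset (Imp (Box \<phi>) \<psi>) \<Phi>)" using BoxImpL.hyps(1) by simp
    have "add_mset (Imp (Box \<phi>) \<psi>) \<Phi> + image_mset Box \<Gamma>0 = add_mset X \<Gamma>" using BoxImpL.prems(1) by simp
    note eq = this
    from dec_nb[OF nb eq nbX] False have "X \<in># \<Phi>" by auto
    then obtain \<Phi>' where P: "\<Phi> = add_mset X \<Phi>'" by (metis multi_member_split)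
    have G: "\<Gamma> = \<Phi>' + image_mset Box \<Gamma>0 + {#Imp (Box \<phi>) \<psi>#}" using eq P by (simp add: add_mset_commute)
    have b1: "mu (\<Phi> + \<Gamma>0 + {#\<psi>, Box \<phi>#}) \<phi> \<le> M" using lt_le_trans'[OF d_BoxImpL1 BoxImpL.prems(2)] .
    have b2: "mu (\<Phi> + image_mset Box \<Gamma>0 + {#\<psi>#}) \<chi> \<le> M" using lt_le_trans'[OF d_BoxImpL2 BoxImpL.prems(2)] .
    have 1: "G4iSLt (Y + (\<Phi>' + \<Gamma>0 + {#\<psi>, Box \<phi>#})) \<phi>" by (rule BoxImpL.IH(1)[OF _ b1]) (simp add: P)
    have 2: "G4iSLt (Y + (\<Phi>' + image_mset Box \<Gamma>0 + {#\<psi>#})) \<chi>" by (rule BoxImpL.IH(2)[OF _ b2]) (simp add: P)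
    obtain PY DY where Y: "no_box PY" "Y = PY + image_mset Box DY" using split_ctx by blast
    have c1: "G4iSLt ((PY + \<Phi>') + (DY + \<Gamma>0) + {#\<psi>, Box \<phi>#}) \<phi>"
      using bu_mset[of DY "PY + (\<Phi>' + \<Gamma>0 + {#\<psi>, Box \<phi>#})" \<phi>] 1 Y(2) by (simp add: ac_simps)
    have c2: "G4iSLt ((PY + \<Phi>') + image_mset Box (DY + \<Gamma>0) + {#\<psi>#}) \<chi>"
      using 2 Y(2) by (simp add: ac_simps)
    have nb': "no_box (PY + \<Phi>')" using Y(1) BoxImpL.hyps(1) P by simp
    from G4iSLt.BoxImpL[OF nb' c1 c2] show ?thesis using G Y(2) by (simp add: ac_simps)
  qed
next
  case (SLtR \<Phi> \<Gamma>0 \<phi>)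
  from dec_nb[OF SLtR.hyps(1) SLtR.prems(1) nbX] obtain \<Phi>' where P: "\<Phi> = add_mset X \<Phi>'"
     and G: "\<Gamma> = \<Phi>' + image_mset Box \<Gamma>0"
    by (metis multi_member_split add_mset_remove_trivial)
  have b1: "mu (\<Phi> + \<Gamma>0 + {#Box \<phi>#}) \<phi> \<le> M" using lt_le_trans'[OF d_SLtR SLtR.prems(2)] .
  have 1: "G4iSLt (Y + (\<Phi>' + \<Gamma>0 + {#Box \<phi>#})) \<phi>" by (rule SLtR.IH[OF _ b1]) (simp add: P)
  obtain PY DY where Y: "no_box PY" "Y = PY + image_mset Box DY" using split_ctx by blast
  have c1: "G4iSLt ((PY + \<Phi>') + (DY + \<Gamma>0) + {#Box \<phi>#}) \<phi>"
    using bu_mset[of DY "PY + (\<Phi>' + \<Gamma>0 + {#Box \<phi>#})" \<phi>] 1 Y(2) by (simp add: ac_simps)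
  have nb': "no_box (PY + \<Phi>')" using Y(1) SLtR.hyps(1) P by simp
  from G4iSLt.SLtR[OF nb' c1] show ?case using G Y(2) by (simp add: ac_simps)
next
  case (AndImpL \<phi> \<psi> \<chi> \<Gamma>0 \<delta>)
  show ?case
  proof (cases "Imp (And \<phi> \<psi>) \<chi> = X")
    case True
    then have "\<Gamma>0 = \<Gamma>" using AndImpL.prems(1) by simp
    then show ?thesis using hAndImp[of \<phi> \<psi> \<chi> \<Gamma> \<delta>] True AndImpL.prems AndImpL.hyps by simp
  next
    case False
    obtain K where K: "\<Gamma>0 = add_mset X K" "\<Gamma> = add_mset (Imp (And \<phi> \<psi>) \<chi>) K"
      using AndImpL.prems(1) ex_split[of _ \<Gamma>0 X \<Gamma>] False by auto
    have b: "mu (add_mset (Imp \<phi> (Imp \<psi> \<chi>)) \<Gamma>0) \<delta> \<le> M" using lt_le_trans'[OF d_AndImpL AndImpL.prems(2)] .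
    have "G4iSLt (Y + add_mset (Imp \<phi> (Imp \<psi> \<chi>)) K) \<delta>" by (rule AndImpL.IH[OF _ b]) (simp add: K add_mset_commute)
    then have "G4iSLt (add_mset (Imp \<phi> (Imp \<psi> \<chi>)) (Y + K)) \<delta>" by simp
    from G4iSLt.AndImpL[OF this] show ?thesis using K by simp
  qed
next
  case (OrImpL \<phi> \<chi> \<psi> \<Gamma>0 \<delta>)
  show ?case
  proof (cases "Imp (Or \<phi> \<psi>) \<chi> = X")
    case True
    then have "\<Gamma>0 = \<Gamma>" using OrImpL.prems(1) by simp
    then show ?thesis using hOrImp[of \<phi> \<psi> \<chi> \<Gamma> \<delta>] True OrImpL.prems OrImpL.hyps by simp
  next
    case False
    obtain K where K: "\<Gamma>0 = add_mset X K" "\<Gamma> = add_mset (Imp (Or \<phi> \<psi>) \<chi>) K"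
      using OrImpL.prems(1) ex_split[of _ \<Gamma>0 X \<Gamma>] False by auto
    have b: "mu (add_mset (Imp \<phi> \<chi>) (add_mset (Imp \<psi> \<chi>) \<Gamma>0)) \<delta> \<le> M" using lt_le_trans'[OF d_OrImpL OrImpL.prems(2)] .
    have "G4iSLt (Y + add_mset (Imp \<phi> \<chi>) (add_mset (Imp \<psi> \<chi>) K)) \<delta>" by (rule OrImpL.IH[OF _ b]) (simp add: K add_mset_commute)
    then have "G4iSLt (add_mset (Imp \<phi> \<chi>) (add_mset (Imp \<psi> \<chi>) (Y + K))) \<delta>" by simp
    from G4iSLt.OrImpL[OF this] show ?thesis using K by simp
  qed
next
  case (ImpImpL \<psi> \<chi> \<Gamma>0 \<phi> \<delta>)
  show ?case
  proof (cases "Imp (Imp \<phi> \<psi>) \<chi> = X")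
    case True
    then have "\<Gamma>0 = \<Gamma>" using ImpImpL.prems(1) by simp
    then show ?thesis using hImpImp[of \<phi> \<psi> \<chi> \<Gamma> \<delta>] True ImpImpL.prems ImpImpL.hyps by simp
  next
    case False
    obtain K where K: "\<Gamma>0 = add_mset X K" "\<Gamma> = add_mset (Imp (Imp \<phi> \<psi>) \<chi>) K"
      using ImpImpL.prems(1) ex_split[of _ \<Gamma>0 X \<Gamma>] False by auto
    have b1: "mu (add_mset (Imp \<psi> \<chi>) \<Gamma>0) (Imp \<phi> \<psi>) \<le> M" using lt_le_trans'[OF d_ImpImpL1 ImpImpL.prems(2)] .
    have b2: "mu (add_mset \<chi> \<Gamma>0) \<delta> \<le> M" using lt_le_trans'[OF d_ImpImpL2 ImpImpL.prems(2)] .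
    have "G4iSLt (Y + add_mset (Imp \<psi> \<chi>) K) (Imp \<phi> \<psi>)" by (rule ImpImpL.IH(1)[OF _ b1]) (simp add: K add_mset_commute)
    moreover have "G4iSLt (Y + add_mset \<chi> K) \<delta>" by (rule ImpImpL.IH(2)[OF _ b2]) (simp add: K add_mset_commute)
    ultimately have "G4iSLt (add_mset (Imp \<psi> \<chi>) (Y + K)) (Imp \<phi> \<psi>)" "G4iSLt (add_mset \<chi> (Y + K)) \<delta>" by simp_all
    from G4iSLt.ImpImpL[OF this] show ?thesis using K by simp
  qed
qed

end



lemma inv_And: "G4iSLt (add_mset (And a b) \<Gamma>) c \<Longrightarrow> G4iSLt (add_mset a (add_mset b \<Gamma>)) c"
proof -
  assume H: "G4iSLt (add_mset (And a b) \<Gamma>) c"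
  have "G4iSLt ({#a, b#} + \<Gamma>) c"
    by (rule frame_aux[where X="And a b" and Y="{#a,b#}" and M="mu (add_mset (And a b) \<Gamma>) c"
          and G="add_mset (And a b) \<Gamma>", OF _ _ _ _ _ _ _ _ _ _ H]) auto
  then show ?thesis by simp
qed

lemma inv_Or1: "G4iSLt (add_mset (Or a b) \<Gamma>) c \<Longrightarrow> G4iSLt (add_mset a \<Gamma>) c"
proof -
  assume H: "G4iSLt (add_mset (Or a b) \<Gamma>) c"
  have "G4iSLt ({#a#} + \<Gamma>) c"
    by (rule frame_aux[where X="Or a b" and Y="{#a#}" and M="mu (add_mset (Or a b) \<Gamma>) c"
          and G="add_mset (Or a b) \<Gamma>", OF _ _ _ _ _ _ _ _ _ _ H]) auto
  then show ?thesis by simp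
qed

lemma inv_Or2: "G4iSLt (add_mset (Or a b) \<Gamma>) c \<Longrightarrow> G4iSLt (add_mset b \<Gamma>) c"
proof -
  assume H: "G4iSLt (add_mset (Or a b) \<Gamma>) c"
  have "G4iSLt ({#b#} + \<Gamma>) c"
    by (rule frame_aux[where X="Or a b" and Y="{#b#}" and M="mu (add_mset (Or a b) \<Gamma>) c"
          and G="add_mset (Or a b) \<Gamma>", OF _ _ _ _ _ _ _ _ _ _ H]) auto
  then show ?thesis by simp
qed

lemma inv_PImp: "G4iSLt (add_mset (Imp (Var p) a) \<Gamma>) c \<Longrightarrow> G4iSLt (add_mset a \<Gamma>) c"
proof -
  assume H: "G4iSLt (add_mset (Imp (Var p) a) \<Gamma>) c"
  have "G4iSLt ({#a#} + \<Gamma>) c"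
    by (rule frame_aux[where X="Imp (Var p) a" and Y="{#a#}" and M="mu (add_mset (Imp (Var p) a) \<Gamma>) c"
          and G="add_mset (Imp (Var p) a) \<Gamma>", OF _ _ _ _ _ _ _ _ _ _ H]) auto
  then show ?thesis by simp
qed

lemma inv_AndImp: "G4iSLt (add_mset (Imp (And a b) d) \<Gamma>) c \<Longrightarrow> G4iSLt (add_mset (Imp a (Imp b d)) \<Gamma>) c"
proof -
  assume H: "G4iSLt (add_mset (Imp (And a b) d) \<Gamma>) c"
  have "G4iSLt ({#Imp a (Imp b d)#} + \<Gamma>) c"
    by (rule frame_aux[where X="Imp (And a b) d" and Y="{#Imp a (Imp b d)#}" and M="mu (add_mset (Imp (And a b) d) \<Gamma>) c"
          and G="add_mset (Imp (And a b) d) \<Gamma>", OF _ _ _ _ _ _ _ _ _ _ H]) auto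
  then show ?thesis by simp
qed

lemma inv_OrImp: "G4iSLt (add_mset (Imp (Or a b) d) \<Gamma>) c \<Longrightarrow> G4iSLt (add_mset (Imp a d) (add_mset (Imp b d) \<Gamma>)) c"
proof -
  assume H: "G4iSLt (add_mset (Imp (Or a b) d) \<Gamma>) c"
  have "G4iSLt ({#Imp a d, Imp b d#} + \<Gamma>) c"
    by (rule frame_aux[where X="Imp (Or a b) d" and Y="{#Imp a d, Imp b d#}" and M="mu (add_mset (Imp (Or a b) d) \<Gamma>) c"
          and G="add_mset (Imp (Or a b) d) \<Gamma>", OF _ _ _ _ _ _ _ _ _ _ H]) auto
  then show ?thesis by simp
qed

lemma inv_ImpImp2: "G4iSLt (add_mset (Imp (Imp a b) d) \<Gamma>) c \<Longrightarrow> G4iSLt (add_mset d \<Gamma>) c"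
proof -
  assume H: "G4iSLt (add_mset (Imp (Imp a b) d) \<Gamma>) c"
  have "G4iSLt ({#d#} + \<Gamma>) c"
    by (rule frame_aux[where X="Imp (Imp a b) d" and Y="{#d#}" and M="mu (add_mset (Imp (Imp a b) d) \<Gamma>) c"
          and G="add_mset (Imp (Imp a b) d) \<Gamma>", OF _ _ _ _ _ _ _ _ _ _ H]) auto
  then show ?thesis by simp
qed

lemma inv_BoxImp2: "G4iSLt (add_mset (Imp (Box a) b) \<Gamma>) c \<Longrightarrow> G4iSLt (add_mset b \<Gamma>) c"
proof -
  assume H: "G4iSLt (add_mset (Imp (Box a) b) \<Gamma>) c"
  have "G4iSLt ({#b#} + \<Gamma>) c"
    by (rule frame_aux[where X="Imp (Box a) b" and Y="{#b#}" and M="mu (add_mset (Imp (Box a) b) \<Gamma>) c"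
          and G="add_mset (Imp (Box a) b) \<Gamma>", OF _ _ _ _ _ _ _ _ _ _ H]) (auto simp: add_mset_commute)
  then show ?thesis by simp
qed

lemma inv_ImpR_aux: "G4iSLt G c \<Longrightarrow> c = Imp a b \<Longrightarrow> G4iSLt (add_mset a G) b"
proof (induction rule: G4iSLt.induct)
  case (BotL \<Gamma> \<chi>) then show ?case by (metis G4iSLt.BotL add_mset_commute)
next
  case (IdP p \<Gamma>) then show ?case by simp
next
  case (AndL \<phi> \<psi> \<Gamma> \<chi>)
  have "G4iSLt (add_mset \<phi> (add_mset \<psi> (add_mset a \<Gamma>))) b" using AndL by (simp add: add_mset_commute)
  from G4iSLt.AndL[OF this] show ?case by (simp add: add_mset_commute)
next
  case (AndR \<Gamma> \<phi> \<psi>) then show ?case by simp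
next
  case (OrL \<phi> \<Gamma> \<chi> \<psi>)
  have "G4iSLt (add_mset \<phi> (add_mset a \<Gamma>)) b" "G4iSLt (add_mset \<psi> (add_mset a \<Gamma>)) b"
    using OrL by (simp_all add: add_mset_commute)
  from G4iSLt.OrL[OF this] show ?case by (simp add: add_mset_commute)
next
  case (OrR1 \<Gamma> \<phi> \<psi>) then show ?case by simp
next
  case (OrR2 \<Gamma> \<psi> \<phi>) then show ?case by simp
next
  case (PImpL p \<phi> \<Gamma> \<chi>)
  have "G4iSLt (add_mset (Var p) (add_mset \<phi> (add_mset a \<Gamma>))) b" using PImpL by (simp add: add_mset_commute)
  from G4iSLt.PImpL[OF this] show ?case by (simp add: add_mset_commute)
next
  case (ImpR \<phi> \<Gamma> \<psi>) then show ?case by simp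
next
  case (BoxImpL \<Phi> \<Gamma> \<psi> \<phi> \<chi>)
  have IH2: "G4iSLt (add_mset a (\<Phi> + image_mset Box \<Gamma> + {#\<psi>#})) b" using BoxImpL by simp
  show ?case
  proof (cases "is_box a")
    case True
    then obtain a' where A: "a = Box a'" by (auto simp: is_box_iff)
    have 1: "G4iSLt (\<Phi> + add_mset a' \<Gamma> + {#\<psi>, Box \<phi>#}) \<phi>" using wk[OF BoxImpL.hyps(2), of a'] by (simp add: add_mset_commute)
    have 2: "G4iSLt (\<Phi> + image_mset Box (add_mset a' \<Gamma>) + {#\<psi>#}) b" using IH2 A by (simp add: add_mset_commute)
    from G4iSLt.BoxImpL[OF BoxImpL.hyps(1) 1 2] show ?thesis using A by (simp add: add_mset_commute)
  next
    case False
    have 1: "G4iSLt (add_mset a \<Phi> + \<Gamma> + {#\<psi>, Box \<phi>#}) \<phi>" using wk[OF BoxImpL.hyps(2), of a] by (simp add: add_mset_commute)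
    have 2: "G4iSLt (add_mset a \<Phi> + image_mset Box \<Gamma> + {#\<psi>#}) b" using IH2 by (simp add: add_mset_commute)
    from G4iSLt.BoxImpL[OF nb_box[OF False BoxImpL.hyps(1)] 1 2] show ?thesis by (simp add: add_mset_commute)
  qed
next
  case (SLtR \<Phi> \<Gamma> \<phi>) then show ?case by simp
next
  case (AndImpL \<phi> \<psi> \<chi> \<Gamma> \<delta>)
  have "G4iSLt (add_mset (Imp \<phi> (Imp \<psi> \<chi>)) (add_mset a \<Gamma>)) b" using AndImpL by (simp add: add_mset_commute)
  from G4iSLt.AndImpL[OF this] show ?case by (simp add: add_mset_commute)
next
  case (OrImpL \<phi> \<chi> \<psi> \<Gamma> \<delta>)
  have "G4iSLt (add_mset (Imp \<phi> \<chi>) (add_mset (Imp \<psi> \<chi>) (add_mset a \<Gamma>))) b" using OrImpL by (simp add: add_mset_commute)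
  from G4iSLt.OrImpL[OF this] show ?case by (simp add: add_mset_commute)
next
  case (ImpImpL \<psi> \<chi> \<Gamma> \<phi> \<delta>)
  have "G4iSLt (add_mset (Imp \<psi> \<chi>) (add_mset a \<Gamma>)) (Imp \<phi> \<psi>)" using wk[OF ImpImpL.hyps(1), of a] by (simp add: add_mset_commute)
  moreover have "G4iSLt (add_mset \<chi> (add_mset a \<Gamma>)) b" using ImpImpL by (simp add: add_mset_commute)
  ultimately show ?case using G4iSLt.ImpImpL by (metis add_mset_commute)
qed

lemma inv_ImpR: "G4iSLt G (Imp a b) \<Longrightarrow> G4iSLt (add_mset a G) b"
  using inv_ImpR_aux by blast

lemma cnt_boxes[simp]: "count (image_mset Box D) (Var p) = 0"
  by (simp add: count_eq_zero_iff) (auto)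

lemma amd: "x \<in># M \<Longrightarrow> add_mset a M - {#x#} = add_mset a (M - {#x#})"
proof -
  assume "x \<in># M"
  then obtain M' where M: "M = add_mset x M'" by (metis multi_member_split)
  have "add_mset a (add_mset x M') = add_mset x (add_mset a M')" by (rule add_mset_commute)
  then show ?thesis using M by simp
qed

lemma amd2: "x \<in># A \<Longrightarrow> A + B - {#x#} = (A - {#x#}) + B"
proof -
  assume "x \<in># A"
  then obtain A' where M: "A = add_mset x A'" by (metis multi_member_split)
  then show ?thesis by simp
qed




lemma mem_cnt: "count M x \<ge> 2 \<Longrightarrow> x \<in># M"
proof -
  assume "count M x \<ge> 2"
  then have "0 < count M x" by arith
  then show ?thesis by (simp only: count_greater_zero_iff)
qed

lemma ctr_aux: "G4iSLt G c \<Longrightarrow> count G (Var p) \<ge> 2 \<Longrightarrow> G4iSLt (G - {#Var p#}) c"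
proof (induction rule: G4iSLt.induct)
  case (BotL \<Gamma> \<chi>)
  have c: "2 \<le> count \<Gamma> (Var p)" using BotL by simp
  have m: "Var p \<in># \<Gamma>" using c by (rule mem_cnt)
  then show ?case by (simp add: amd G4iSLt.BotL)
next
  case (IdP q \<Gamma>)
  have m: "Var p \<in># \<Gamma>" using IdP by (cases "q = p") (auto intro: mem_cnt)
  then show ?case by (simp add: amd G4iSLt.IdP)
next
  case (AndL \<phi> \<psi> \<Gamma> \<chi>)
  have c: "2 \<le> count \<Gamma> (Var p)" using AndL.prems by simp
  have m: "Var p \<in># \<Gamma>" using c by (rule mem_cnt)
  have "G4iSLt (add_mset \<phi> (add_mset \<psi> \<Gamma>) - {#Var p#}) \<chi>" by (rule AndL.IH) (use c m in simp)
  then have "G4iSLt (add_mset \<phi> (add_mset \<psi> (\<Gamma> - {#Var p#}))) \<chi>" using m by (simp add: amd)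
  from G4iSLt.AndL[OF this] show ?case using m by (simp add: amd)
next
  case (AndR \<Gamma> \<phi> \<psi>)
  have "G4iSLt (\<Gamma> - {#Var p#}) \<phi>" "G4iSLt (\<Gamma> - {#Var p#}) \<psi>" using AndR.IH AndR.prems by blast+
  then show ?case by (rule G4iSLt.AndR)
next
  case (OrL \<phi> \<Gamma> \<chi> \<psi>)
  have c: "2 \<le> count \<Gamma> (Var p)" using OrL.prems by simp
  have m: "Var p \<in># \<Gamma>" using c by (rule mem_cnt)
  have "G4iSLt (add_mset \<phi> \<Gamma> - {#Var p#}) \<chi>" by (rule OrL.IH(1)) (use c m in simp)
  moreover have "G4iSLt (add_mset \<psi> \<Gamma> - {#Var p#}) \<chi>" by (rule OrL.IH(2)) (use c m in simp)
  ultimately have "G4iSLt (add_mset \<phi> (\<Gamma> - {#Var p#})) \<chi>" "G4iSLt (add_mset \<psi> (\<Gamma> - {#Var p#})) \<chi>"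
    using m by (simp_all add: amd)
  from G4iSLt.OrL[OF this] show ?case using m by (simp add: amd)
next
  case (OrR1 \<Gamma> \<phi> \<psi>)
  have "G4iSLt (\<Gamma> - {#Var p#}) \<phi>" using OrR1.IH OrR1.prems by blast
  then show ?case by (rule G4iSLt.OrR1)
next
  case (OrR2 \<Gamma> \<psi> \<phi>)
  have "G4iSLt (\<Gamma> - {#Var p#}) \<psi>" using OrR2.IH OrR2.prems by blast
  then show ?case by (rule G4iSLt.OrR2)
next
  case (PImpL q \<phi> \<Gamma> \<chi>)
  show ?case
  proof (cases "q = p")
    case True
    have c: "1 \<le> count \<Gamma> (Var p)" using PImpL.prems True by simp
    then have m: "Var p \<in># \<Gamma>" by (simp only: count_greater_zero_iff[symmetric])
    then obtain \<Gamma>1 where G1: "\<Gamma> = add_mset (Var p) \<Gamma>1" by (metis multi_member_split)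
    have "G4iSLt (add_mset (Var q) (add_mset \<phi> \<Gamma>) - {#Var p#}) \<chi>" by (rule PImpL.IH) (use c m True in simp)
    then have "G4iSLt (add_mset \<phi> (add_mset (Var p) \<Gamma>1)) \<chi>" using G1 True by simp
    then have "G4iSLt (add_mset (Var p) (add_mset \<phi> \<Gamma>1)) \<chi>" by (simp add: add_mset_commute)
    from G4iSLt.PImpL[OF this] have "G4iSLt (add_mset (Var p) (add_mset (Imp (Var p) \<phi>) \<Gamma>1)) \<chi>" .
    then show ?thesis using G1 True by (simp add: add_mset_commute)
  next
    case False
    have c: "2 \<le> count \<Gamma> (Var p)" using PImpL.prems False by simp
    have m: "Var p \<in># \<Gamma>" using c by (rule mem_cnt)
    have "G4iSLt (add_mset (Var q) (add_mset \<phi> \<Gamma>) - {#Var p#}) \<chi>" by (rule PImpL.IH) (use c m in simp)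
    then have "G4iSLt (add_mset (Var q) (add_mset \<phi> (\<Gamma> - {#Var p#}))) \<chi>" using m by (simp add: amd)
    from G4iSLt.PImpL[OF this] show ?thesis using m by (simp add: amd)
  qed
next
  case (ImpR \<phi> \<Gamma> \<psi>)
  have c: "2 \<le> count \<Gamma> (Var p)" using ImpR.prems by simp
  have m: "Var p \<in># \<Gamma>" using c by (rule mem_cnt)
  have "G4iSLt (add_mset \<phi> \<Gamma> - {#Var p#}) \<psi>" by (rule ImpR.IH) (use c m in simp)
  then have "G4iSLt (add_mset \<phi> (\<Gamma> - {#Var p#})) \<psi>" using m by (simp add: amd)
  then show ?case by (rule G4iSLt.ImpR)
next
  case (BoxImpL \<Phi> \<Gamma> \<psi> \<phi> \<chi>)
  have c: "count \<Phi> (Var p) \<ge> 2" using BoxImpL.prems by simp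
  have m: "Var p \<in># \<Phi>" using c by (rule mem_cnt)
  then obtain \<Phi>1 where P: "\<Phi> = add_mset (Var p) \<Phi>1" by (metis multi_member_split)
  have e1: "\<Phi> + \<Gamma> + {#\<psi>, Box \<phi>#} - {#Var p#} = \<Phi>1 + \<Gamma> + {#\<psi>, Box \<phi>#}"
    unfolding P by (simp only: union_mset_add_mset_left add_mset_remove_trivial)
  have e2: "\<Phi> + image_mset Box \<Gamma> + {#\<psi>#} - {#Var p#} = \<Phi>1 + image_mset Box \<Gamma> + {#\<psi>#}"
    unfolding P by (simp only: union_mset_add_mset_left add_mset_remove_trivial)
  have e3: "\<Phi> + image_mset Box \<Gamma> + {#Imp (Box \<phi>) \<psi>#} - {#Var p#} = \<Phi>1 + image_mset Box \<Gamma> + {#Imp (Box \<phi>) \<psi>#}"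
    unfolding P by (simp only: union_mset_add_mset_left add_mset_remove_trivial)
  have c1: "2 \<le> count (\<Phi> + \<Gamma> + {#\<psi>, Box \<phi>#}) (Var p)" using c m by simp
  have c2: "2 \<le> count (\<Phi> + image_mset Box \<Gamma> + {#\<psi>#}) (Var p)" using c m by simp
  have 1: "G4iSLt (\<Phi>1 + \<Gamma> + {#\<psi>, Box \<phi>#}) \<phi>" using BoxImpL.IH(1)[OF c1] unfolding e1 .
  have 2: "G4iSLt (\<Phi>1 + image_mset Box \<Gamma> + {#\<psi>#}) \<chi>" using BoxImpL.IH(2)[OF c2] unfolding e2 .
  have nb: "no_box \<Phi>1" using BoxImpL.hyps(1) P by simp
  from G4iSLt.BoxImpL[OF nb 1 2] show ?case unfolding e3 .
next
  case (SLtR \<Phi> \<Gamma> \<phi>)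
  have c: "count \<Phi> (Var p) \<ge> 2" using SLtR.prems by simp
  have m: "Var p \<in># \<Phi>" using c by (rule mem_cnt)
  then obtain \<Phi>1 where P: "\<Phi> = add_mset (Var p) \<Phi>1" by (metis multi_member_split)
  have e1: "\<Phi> + \<Gamma> + {#Box \<phi>#} - {#Var p#} = \<Phi>1 + \<Gamma> + {#Box \<phi>#}"
    unfolding P by (simp only: union_mset_add_mset_left add_mset_remove_trivial)
  have e3: "\<Phi> + image_mset Box \<Gamma> - {#Var p#} = \<Phi>1 + image_mset Box \<Gamma>"
    unfolding P by (simp only: union_mset_add_mset_left add_mset_remove_trivial)
  have c1: "2 \<le> count (\<Phi> + \<Gamma> + {#Box \<phi>#}) (Var p)" using c m by simp
  have 1: "G4iSLt (\<Phi>1 + \<Gamma> + {#Box \<phi>#}) \<phi>" using SLtR.IH[OF c1] unfolding e1 .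
  have nb: "no_box \<Phi>1" using SLtR.hyps(1) P by simp
  from G4iSLt.SLtR[OF nb 1] show ?case unfolding e3 .
next
  case (AndImpL \<phi> \<psi> \<chi> \<Gamma> \<delta>)
  have c: "2 \<le> count \<Gamma> (Var p)" using AndImpL.prems by simp
  have m: "Var p \<in># \<Gamma>" using c by (rule mem_cnt)
  have "G4iSLt (add_mset (Imp \<phi> (Imp \<psi> \<chi>)) \<Gamma> - {#Var p#}) \<delta>" by (rule AndImpL.IH) (use c m in simp)
  then have "G4iSLt (add_mset (Imp \<phi> (Imp \<psi> \<chi>)) (\<Gamma> - {#Var p#})) \<delta>" using m by (simp add: amd)
  from G4iSLt.AndImpL[OF this] show ?case using m by (simp add: amd)
next
  case (OrImpL \<phi> \<chi> \<psi> \<Gamma> \<delta>)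
  have c: "2 \<le> count \<Gamma> (Var p)" using OrImpL.prems by simp
  have m: "Var p \<in># \<Gamma>" using c by (rule mem_cnt)
  have "G4iSLt (add_mset (Imp \<phi> \<chi>) (add_mset (Imp \<psi> \<chi>) \<Gamma>) - {#Var p#}) \<delta>" by (rule OrImpL.IH) (use c m in simp)
  then have "G4iSLt (add_mset (Imp \<phi> \<chi>) (add_mset (Imp \<psi> \<chi>) (\<Gamma> - {#Var p#}))) \<delta>" using m by (simp add: amd)
  from G4iSLt.OrImpL[OF this] show ?case using m by (simp add: amd)
next
  case (ImpImpL \<psi> \<chi> \<Gamma> \<phi> \<delta>)
  have c: "2 \<le> count \<Gamma> (Var p)" using ImpImpL.prems by simp
  have m: "Var p \<in># \<Gamma>" using c by (rule mem_cnt)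
  have "G4iSLt (add_mset (Imp \<psi> \<chi>) \<Gamma> - {#Var p#}) (Imp \<phi> \<psi>)" by (rule ImpImpL.IH(1)) (use c m in simp)
  moreover have "G4iSLt (add_mset \<chi> \<Gamma> - {#Var p#}) \<delta>" by (rule ImpImpL.IH(2)) (use c m in simp)
  ultimately have "G4iSLt (add_mset (Imp \<psi> \<chi>) (\<Gamma> - {#Var p#})) (Imp \<phi> \<psi>)" "G4iSLt (add_mset \<chi> (\<Gamma> - {#Var p#})) \<delta>"
    using m by (simp_all add: amd)
  from G4iSLt.ImpImpL[OF this] show ?case using m by (simp add: amd)
qed

lemma ctr: "G4iSLt (add_mset (Var p) (add_mset (Var p) \<Gamma>)) c \<Longrightarrow> G4iSLt (add_mset (Var p) \<Gamma>) c"
  using ctr_aux[of "add_mset (Var p) (add_mset (Var p) \<Gamma>)" c p] by simp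



lemma idmp: "(\<forall>\<Gamma>. G4iSLt (add_mset d \<Gamma>) d) \<and>
  (\<forall>b \<Gamma> e. G4iSLt (add_mset b (add_mset d \<Gamma>)) e \<longrightarrow> G4iSLt (add_mset (Imp d b) (add_mset d \<Gamma>)) e)"
proof (induction d)
  case (Var p)
  have "G4iSLt (add_mset (Imp (Var p) b) (add_mset (Var p) \<Gamma>)) e"
    if "G4iSLt (add_mset b (add_mset (Var p) \<Gamma>)) e" for b \<Gamma> e
  proof -
    have "G4iSLt (add_mset (Var p) (add_mset b \<Gamma>)) e" using that by (simp add: add_mset_commute)
    from G4iSLt.PImpL[OF this] show ?thesis by (simp add: add_mset_commute)
  qed
  then show ?case by (auto intro: G4iSLt.IdP)
next
  case Bot
  then show ?case by (metis G4iSLt.BotL add_mset_commute)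
next
  case (And x y)
  have idx: "\<And>\<Gamma>. G4iSLt (add_mset x \<Gamma>) x" and idy: "\<And>\<Gamma>. G4iSLt (add_mset y \<Gamma>) y"
    and mpx: "\<And>b \<Gamma> e. G4iSLt (add_mset b (add_mset x \<Gamma>)) e \<Longrightarrow> G4iSLt (add_mset (Imp x b) (add_mset x \<Gamma>)) e"
    and mpy: "\<And>b \<Gamma> e. G4iSLt (add_mset b (add_mset y \<Gamma>)) e \<Longrightarrow> G4iSLt (add_mset (Imp y b) (add_mset y \<Gamma>)) e"
    using And by auto
  have id: "G4iSLt (add_mset (And x y) \<Gamma>) (And x y)" for \<Gamma>
  proof -
    have "G4iSLt (add_mset x (add_mset y \<Gamma>)) x" by (rule idx)
    moreover have "G4iSLt (add_mset x (add_mset y \<Gamma>)) y" using idy[of "add_mset x \<Gamma>"] by (simp add: add_mset_commute)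
    ultimately have "G4iSLt (add_mset x (add_mset y \<Gamma>)) (And x y)" by (rule G4iSLt.AndR)
    then show ?thesis by (rule G4iSLt.AndL)
  qed
  have mp: "G4iSLt (add_mset (Imp (And x y) b) (add_mset (And x y) \<Gamma>)) e"
    if H: "G4iSLt (add_mset b (add_mset (And x y) \<Gamma>)) e" for b \<Gamma> e
  proof -
    have "G4iSLt (add_mset x (add_mset y (add_mset b \<Gamma>))) e" using inv_And[of x y "add_mset b \<Gamma>"] H by (simp add: add_mset_commute)
    then have "G4iSLt (add_mset b (add_mset y (add_mset x \<Gamma>))) e" by (simp add: add_mset_commute)
    from mpy[OF this] have "G4iSLt (add_mset (Imp y b) (add_mset x (add_mset y \<Gamma>))) e" by (simp add: add_mset_commute)
    from mpx[OF this] have "G4iSLt (add_mset (Imp x (Imp y b)) (add_mset x (add_mset y \<Gamma>))) e" .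
    then have "G4iSLt (add_mset (Imp x (Imp y b)) (add_mset x (add_mset y \<Gamma>))) e" .
    from G4iSLt.AndImpL[OF this] have "G4iSLt (add_mset x (add_mset y (add_mset (Imp (And x y) b) \<Gamma>))) e"
      by (simp add: add_mset_commute)
    from G4iSLt.AndL[OF this] show ?thesis by (simp add: add_mset_commute)
  qed
  show ?case using id mp by blast
next
  case (Or x y)
  have idx: "\<And>\<Gamma>. G4iSLt (add_mset x \<Gamma>) x" and idy: "\<And>\<Gamma>. G4iSLt (add_mset y \<Gamma>) y"
    and mpx: "\<And>b \<Gamma> e. G4iSLt (add_mset b (add_mset x \<Gamma>)) e \<Longrightarrow> G4iSLt (add_mset (Imp x b) (add_mset x \<Gamma>)) e"
    and mpy: "\<And>b \<Gamma> e. G4iSLt (add_mset b (add_mset y \<Gamma>)) e \<Longrightarrow> G4iSLt (add_mset (Imp y b) (add_mset y \<Gamma>)) e"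
    using Or by auto
  have id: "G4iSLt (add_mset (Or x y) \<Gamma>) (Or x y)" for \<Gamma>
    using G4iSLt.OrL[OF G4iSLt.OrR1[OF idx] G4iSLt.OrR2[OF idy]] .
  have mp: "G4iSLt (add_mset (Imp (Or x y) b) (add_mset (Or x y) \<Gamma>)) e"
    if H: "G4iSLt (add_mset b (add_mset (Or x y) \<Gamma>)) e" for b \<Gamma> e
  proof -
    have "G4iSLt (add_mset b (add_mset x \<Gamma>)) e" using inv_Or1[of x y "add_mset b \<Gamma>"] H by (simp add: add_mset_commute)
    from wk[OF mpx[OF this], of "Imp y b"]
    have 1: "G4iSLt (add_mset x (add_mset (Imp x b) (add_mset (Imp y b) \<Gamma>))) e" by (simp add: add_mset_commute)
    have "G4iSLt (add_mset b (add_mset y \<Gamma>)) e" using inv_Or2[of x y "add_mset b \<Gamma>"] H by (simp add: add_mset_commute)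
    from wk[OF mpy[OF this], of "Imp x b"]
    have 2: "G4iSLt (add_mset y (add_mset (Imp x b) (add_mset (Imp y b) \<Gamma>))) e" by (simp add: add_mset_commute)
    from G4iSLt.OrL[OF 1 2] have "G4iSLt (add_mset (Imp x b) (add_mset (Imp y b) (add_mset (Or x y) \<Gamma>))) e"
      by (simp add: add_mset_commute)
    from G4iSLt.OrImpL[OF this] show ?thesis .
  qed
  show ?case using id mp by blast
next
  case (Imp x y)
  have idx: "\<And>\<Gamma>. G4iSLt (add_mset x \<Gamma>) x" and idy: "\<And>\<Gamma>. G4iSLt (add_mset y \<Gamma>) y"
    and mpx: "\<And>b \<Gamma> e. G4iSLt (add_mset b (add_mset x \<Gamma>)) e \<Longrightarrow> G4iSLt (add_mset (Imp x b) (add_mset x \<Gamma>)) e"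
    using Imp by auto
  have id: "G4iSLt (add_mset (Imp x y) \<Gamma>) (Imp x y)" for \<Gamma>
  proof -
    have "G4iSLt (add_mset (Imp x y) (add_mset x \<Gamma>)) y" by (rule mpx[OF idy])
    then have "G4iSLt (add_mset x (add_mset (Imp x y) \<Gamma>)) y" by (simp add: add_mset_commute)
    then show ?thesis by (rule G4iSLt.ImpR)
  qed
  have mp: "G4iSLt (add_mset (Imp (Imp x y) b) (add_mset (Imp x y) \<Gamma>)) e"
    if H: "G4iSLt (add_mset b (add_mset (Imp x y) \<Gamma>)) e" for b \<Gamma> e
  proof -
    have "G4iSLt (add_mset (Imp y b) (add_mset (Imp x y) \<Gamma>)) (Imp x y)" using id[of "add_mset (Imp y b) \<Gamma>"]
      by (simp add: add_mset_commute)
    from G4iSLt.ImpImpL[OF this H] show ?thesis .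
  qed
  show ?case using id mp by blast
next
  case (Box x)
  have idx: "\<And>\<Gamma>. G4iSLt (add_mset x \<Gamma>) x" using Box by auto
  have id: "G4iSLt (add_mset (Box x) \<Gamma>) (Box x)" for \<Gamma>
  proof -
    obtain P D where PD: "no_box P" "\<Gamma> = P + image_mset Box D" using split_ctx by blast
    have "G4iSLt (P + add_mset x D + {#Box x#}) x" using idx[of "P + D + {#Box x#}"] by (simp add: add_mset_commute)
    from G4iSLt.SLtR[OF PD(1) this] show ?thesis using PD by simp
  qed
  have mp: "G4iSLt (add_mset (Imp (Box x) b) (add_mset (Box x) \<Gamma>)) e"
    if H: "G4iSLt (add_mset b (add_mset (Box x) \<Gamma>)) e" for b \<Gamma> e
  proof -
    obtain P D where PD: "no_box P" "\<Gamma> = P + image_mset Box D" using split_ctx by blast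
    have 1: "G4iSLt (P + add_mset x D + {#b, Box x#}) x" using idx[of "P + D + {#b, Box x#}"] by (simp add: add_mset_commute)
    have 2: "G4iSLt (P + image_mset Box (add_mset x D) + {#b#}) e" using H PD by (simp add: add_mset_commute)
    from G4iSLt.BoxImpL[OF PD(1) 1 2] show ?thesis using PD by (simp add: add_mset_commute)
  qed
  show ?case using id mp by blast
qed

lemma ident: "G4iSLt (add_mset d \<Gamma>) d"
  using idmp by blast

lemma mpl: "G4iSLt (add_mset b (add_mset d \<Gamma>)) e \<Longrightarrow> G4iSLt (add_mset (Imp d b) (add_mset d \<Gamma>)) e"
  using idmp by blast




lemma m_And1: "Kc b (add_mset a G) c < Kc (And a b) G c"
  by (unfold Kc_def mu_def, simp add: f_def g_def, (rule dom, auto simp: f_def g_def)?)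
lemma m_And2: "Kc a G c < Kc (And a b) G c"
  by (unfold Kc_def mu_def, simp add: f_def g_def, (rule dom, auto simp: f_def g_def)?)
lemma m_Or1: "Kc a G c < Kc (Or a b) G c"
  by (unfold Kc_def mu_def, simp add: f_def g_def, (rule dom, auto simp: f_def g_def)?)
lemma m_Or2: "Kc b G c < Kc (Or a b) G c"
  by (unfold Kc_def mu_def, simp add: f_def g_def, (rule dom, auto simp: f_def g_def)?)
lemma m_PImp: "Kc a G c < Kc (Imp (Var p) a) G c"
  by (unfold Kc_def mu_def, simp add: f_def g_def, (rule dom, auto simp: f_def g_def)?)
lemma m_AndImp: "Kc (Imp a (Imp b d)) G c < Kc (Imp (And a b) d) G c"
  by (unfold Kc_def mu_def, simp add: f_def g_def, (rule dom, auto simp: f_def g_def)?)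
lemma m_OrImp1: "Kc (Imp a d) (add_mset (Imp b d) G) c < Kc (Imp (Or a b) d) G c"
  by (unfold Kc_def mu_def, simp add: f_def g_def, (rule dom, auto simp: f_def g_def)?)
lemma m_OrImp2: "Kc (Imp b d) G c < Kc (Imp (Or a b) d) G c"
  by (unfold Kc_def mu_def, simp add: f_def g_def, (rule dom, auto simp: f_def g_def)?)
lemma m_II1: "Kc (Imp e y) (add_mset y G) b < Kc (Imp (Imp e y) b) G c"
  by (unfold Kc_def mu_def, simp add: f_def g_def, (rule dom, auto simp: f_def g_def)?)
lemma m_II2: "Kc (Imp y b) G (Imp e y) < Kc (Imp (Imp e y) b) G c"
  by (unfold Kc_def mu_def, simp add: f_def g_def, (rule dom, auto simp: f_def g_def)?)
lemma m_II3: "Kc (Imp e y) G b < Kc (Imp (Imp e y) b) G c"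
  by (unfold Kc_def mu_def, simp add: f_def g_def, (rule dom, auto simp: f_def g_def)?)
lemma m_II4: "Kc b G c < Kc (Imp (Imp e y) b) G c"
  by (unfold Kc_def mu_def, simp add: f_def g_def, (rule dom, auto simp: f_def g_def)?)
lemma m_BI2: "Kc (Box e) G b < Kc (Imp (Box e) b) G c"
  by (unfold Kc_def mu_def, simp add: f_def g_def, (rule dom, auto simp: f_def g_def)?)
lemma m_BI3: "Kc b G c < Kc (Imp (Box e) b) G c"
  by (unfold Kc_def mu_def, simp add: f_def g_def, (rule dom, auto simp: f_def g_def)?)
lemma d_L: "mu (add_mset a (add_mset (Imp b d) G)) b < mu (add_mset (Imp (Imp a b) d) G) x"
  by (unfold mu_def, simp add: f_def g_def, (rule dom, auto simp: f_def g_def)?)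

lemma gg_le: "image_mset g D + image_mset g D \<le> image_mset g (image_mset Box D) + image_mset g (image_mset Box D)"
  by (intro add_mono gbox_le)

lemma m_BI1: "Kc b (P + D + {#Box e#}) e < Kc (Imp (Box e) b) (P + image_mset Box D) c"
proof -
  have "image_mset g D + image_mset g D + {#g (Box e), g (Box e), f e, f e, f b, f b, g b#}
     < image_mset g (image_mset Box D) + image_mset g (image_mset Box D) + {#f c, f c, f (Imp (Box e) b), f (Imp (Box e) b), g (Imp (Box e) b)#}"
    by (rule ltI[OF gg_le], rule dom) (auto simp: f_def g_def)
  then show ?thesis unfolding Kc_def mu_def by (simp add: ac_simps add_mset_commute)
qed

lemma m_S1: "Kc c (P + D + {#Box x, Box c#}) x < Kc (Box c) (P + image_mset Box D) (Box x)"
proof -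
  have "image_mset g D + image_mset g D + {#g (Box x), g (Box x), g (Box c), g (Box c), f x, f x, f c, f c, g c#}
     < image_mset g (image_mset Box D) + image_mset g (image_mset Box D) + {#f (Box x), f (Box x), f (Box c), f (Box c), g (Box c)#}"
  proof -
    have "{#g (Box x), g (Box x), g (Box c), f x, f x, f c, f c, g c#} < {#f (Box x), f (Box x), f (Box c), f (Box c)#}"
      by (rule dom) (auto simp: f_def g_def)
    then have "{#g (Box x), g (Box x), g (Box c), f x, f x, f c, f c, g c#} + {#g (Box c)#} < {#f (Box x), f (Box x), f (Box c), f (Box c)#} + {#g (Box c)#}"
      by (rule add_strict_right_mono)
    then have "{#g (Box x), g (Box x), g (Box c), g (Box c), f x, f x, f c, f c, g c#} < {#f (Box x), f (Box x), f (Box c), f (Box c), g (Box c)#}"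
      by (simp add: add_mset_commute)
    then show ?thesis by (rule ltI[OF gg_le])
  qed
  then show ?thesis unfolding Kc_def mu_def by (simp add: ac_simps add_mset_commute)
qed

lemma m_B1: "Kc c (P + D + {#b, Box e, Box c#}) e < Kc (Box c) (P + image_mset Box D + {#Imp (Box e) b#}) x"
proof -
  have "image_mset g D + image_mset g D + {#g b, g b, g (Box e), g (Box e), g (Box c), g (Box c), f e, f e, f c, f c, g c#}
     < image_mset g (image_mset Box D) + image_mset g (image_mset Box D) + {#g (Imp (Box e) b), g (Imp (Box e) b), f x, f x, f (Box c), f (Box c), g (Box c)#}"
  proof -
    have "{#g b, g b, g (Box e), g (Box e), g (Box c), f e, f e, f c, f c, g c#} < {#g (Imp (Box e) b), g (Imp (Box e) b), f x, f x, f (Box c), f (Box c)#}"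
      by (rule dom) (auto simp: f_def g_def)
    then have "{#g b, g b, g (Box e), g (Box e), g (Box c), f e, f e, f c, f c, g c#} + {#g (Box c)#} < {#g (Imp (Box e) b), g (Imp (Box e) b), f x, f x, f (Box c), f (Box c)#} + {#g (Box c)#}"
      by (rule add_strict_right_mono)
    then have "{#g b, g b, g (Box e), g (Box e), g (Box c), g (Box c), f e, f e, f c, f c, g c#} < {#g (Imp (Box e) b), g (Imp (Box e) b), f x, f x, f (Box c), f (Box c), g (Box c)#}"
      by (simp add: add_mset_commute)
    then show ?thesis by (rule ltI[OF gg_le])
  qed
  then show ?thesis unfolding Kc_def mu_def by (simp add: ac_simps add_mset_commute)
qed

lemma L_meas: "mu (add_mset (Imp (Imp a b) d) G1) E \<le> mu (add_mset (Imp (Imp a b) d) G0) A \<Longrightarrow>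
  Kc b (add_mset a (add_mset (Imp b d) G1)) E < Kc A (add_mset (Imp (Imp a b) d) G0) x"
proof -
  assume le: "mu (add_mset (Imp (Imp a b) d) G1) E \<le> mu (add_mset (Imp (Imp a b) d) G0) A"
  let ?F = "Imp (Imp a b) d"
  have 1: "Kc b (add_mset a (add_mset (Imp b d) G1)) E < mu (add_mset ?F G1) E + mu (add_mset ?F G1) E"
    by (unfold Kc_def mu_def, simp add: f_def g_def, (rule dom, auto simp: f_def g_def)?)
  have 2: "mu (add_mset ?F G1) E + mu (add_mset ?F G1) E \<le> mu (add_mset ?F G0) A + mu (add_mset ?F G0) A"
    by (rule add_mono[OF le le])
  have 3: "mu (add_mset ?F G0) A + mu (add_mset ?F G0) A < Kc A (add_mset ?F G0) x"
    unfolding Kc_def mu_def by (simp add: add_mset_commute)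
  show ?thesis using 1 2 3 by (meson order.strict_trans1 order.strict_trans)
qed



definition cutP :: "nat multiset \<Rightarrow> bool" where
  "cutP M \<longleftrightarrow> (\<forall>A \<Gamma> \<chi>. Kc A \<Gamma> \<chi> < M \<longrightarrow> G4iSLt \<Gamma> A \<longrightarrow> G4iSLt (add_mset A \<Gamma>) \<chi> \<longrightarrow> G4iSLt \<Gamma> \<chi>)"

lemma mem_BotL: "Bot \<in># G \<Longrightarrow> G4iSLt G c"
  by (metis G4iSLt.BotL multi_member_split)

lemma mem_IdP: "Var p \<in># G \<Longrightarrow> G4iSLt G (Var p)"
  by (metis G4iSLt.IdP multi_member_split)

lemma cut_right:
  assumes IH: "cutP (Kc A \<Gamma> \<chi>)"
    and LD: "G4iSLt \<Gamma> A" and RD: "G4iSLt (add_mset A \<Gamma>) \<chi>"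
    and nv: "\<And>p. A \<noteq> Var p" and nB: "A \<noteq> Bot"
    and rrAnd: "\<And>a b. A = And a b \<Longrightarrow> G4iSLt \<Gamma> a \<and> G4iSLt \<Gamma> b"
    and rrOr: "\<And>a b. A = Or a b \<Longrightarrow> G4iSLt \<Gamma> a \<or> G4iSLt \<Gamma> b"
    and rrImp: "\<And>a b. A = Imp a b \<Longrightarrow> G4iSLt (add_mset a \<Gamma>) b"
    and rrBox: "\<And>c. A = Box c \<Longrightarrow> \<exists>P D. no_box P \<and> \<Gamma> = P + image_mset Box D \<and> G4iSLt (P + D + {#Box c#}) c"
  shows "G4iSLt \<Gamma> \<chi>"
proof -
  have cut: "\<And>A' \<Gamma>' \<chi>'. Kc A' \<Gamma>' \<chi>' < Kc A \<Gamma> \<chi> \<Longrightarrow> G4iSLt \<Gamma>' A' \<Longrightarrow> G4iSLt (add_mset A' \<Gamma>') \<chi>' \<Longrightarrow> G4iSLt \<Gamma>' \<chi>'"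
    using IH unfolding cutP_def by blast
  show ?thesis using RD
  proof (cases rule: G4iSLt.cases)
    case (BotL \<Gamma>0)
    have "Bot \<in># add_mset A \<Gamma>" using BotL(1) by simp
    then show ?thesis using nB by (auto intro: mem_BotL)
  next
    case (IdP p \<Gamma>0)
    have "Var p \<in># add_mset A \<Gamma>" using IdP(1) by simp
    then show ?thesis using nv IdP(2) by (auto intro: mem_IdP)
  next
    case (AndL \<phi> \<psi> \<Gamma>0)
    show ?thesis
    proof (cases "A = And \<phi> \<psi>")
      case True
      then have G0: "\<Gamma>0 = \<Gamma>" using AndL(1) by simp
      have l: "G4iSLt \<Gamma> \<phi>" "G4iSLt \<Gamma> \<psi>" using rrAnd[OF True] by auto
      have "G4iSLt (add_mset \<phi> \<Gamma>) \<chi>"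
        by (rule cut[of \<psi> "add_mset \<phi> \<Gamma>" \<chi>]) (use True m_And1 wk[OF l(2)] AndL G0 in \<open>simp_all add: add_mset_commute\<close>)
      then show ?thesis by (intro cut[of \<phi> \<Gamma> \<chi>]) (use True m_And2 l in simp_all)
    next
      case False
      obtain K where K: "\<Gamma> = add_mset (And \<phi> \<psi>) K" "\<Gamma>0 = add_mset A K"
        using ex_split[OF AndL(1) False] by auto
      have l: "G4iSLt (add_mset \<phi> (add_mset \<psi> K)) A" using inv_And LD K by simp
      have "G4iSLt (add_mset \<phi> (add_mset \<psi> K)) \<chi>"
        by (rule cut[OF _ l]) (use K Kc_mono[OF d_AndL] AndL in \<open>simp_all add: add_mset_commute\<close>)
      from G4iSLt.AndL[OF this] show ?thesis using K by simp
    qed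
  next
    case (AndR \<phi> \<psi>)
    have "G4iSLt \<Gamma> \<phi>" by (rule cut[OF _ LD]) (use AndR Kc_mono[OF d_AndR1] in simp_all)
    moreover have "G4iSLt \<Gamma> \<psi>" by (rule cut[OF _ LD]) (use AndR Kc_mono[OF d_AndR2] in simp_all)
    ultimately show ?thesis using AndR by (simp add: G4iSLt.AndR)
  next
    case (OrL \<phi> \<Gamma>0 \<psi>)
    show ?thesis
    proof (cases "A = Or \<phi> \<psi>")
      case True
      then have G0: "\<Gamma>0 = \<Gamma>" using OrL(1) by simp
      from rrOr[OF True] show ?thesis
      proof
        assume "G4iSLt \<Gamma> \<phi>"
        then show ?thesis by (rule cut[rotated]) (use True m_Or1 OrL G0 in simp_all)
      next
        assume "G4iSLt \<Gamma> \<psi>"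
        then show ?thesis by (rule cut[rotated]) (use True m_Or2 OrL G0 in simp_all)
      qed
    next
      case False
      obtain K where K: "\<Gamma> = add_mset (Or \<phi> \<psi>) K" "\<Gamma>0 = add_mset A K"
        using ex_split[OF OrL(1) False] by auto
      have l1: "G4iSLt (add_mset \<phi> K) A" using inv_Or1 LD K by simp
      have l2: "G4iSLt (add_mset \<psi> K) A" using inv_Or2 LD K by simp
      have "G4iSLt (add_mset \<phi> K) \<chi>"
        by (rule cut[OF _ l1]) (use K Kc_mono[OF d_OrL1] OrL in \<open>simp_all add: add_mset_commute\<close>)
      moreover have "G4iSLt (add_mset \<psi> K) \<chi>"
        by (rule cut[OF _ l2]) (use K Kc_mono[OF d_OrL2] OrL in \<open>simp_all add: add_mset_commute\<close>)
      ultimately show ?thesis using K by (simp add: G4iSLt.OrL)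
    qed
  next
    case (OrR1 \<phi> \<psi>)
    have "G4iSLt \<Gamma> \<phi>" by (rule cut[OF _ LD]) (use OrR1 Kc_mono[OF d_OrR1] in simp_all)
    then show ?thesis using OrR1 by (simp add: G4iSLt.OrR1)
  next
    case (OrR2 \<psi> \<phi>)
    have "G4iSLt \<Gamma> \<psi>" by (rule cut[OF _ LD]) (use OrR2 Kc_mono[OF d_OrR2] in simp_all)
    then show ?thesis using OrR2 by (simp add: G4iSLt.OrR2)
  next
    case (PImpL p \<phi> \<Gamma>0)
    have nvp: "A \<noteq> Var p" using nv by simp
    obtain K1 where K1: "\<Gamma> = add_mset (Var p) K1" "add_mset (Imp (Var p) \<phi>) \<Gamma>0 = add_mset A K1"
      using ex_split[OF PImpL(1) nvp] by auto
    show ?thesis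
    proof (cases "A = Imp (Var p) \<phi>")
      case True
      then have G0: "\<Gamma>0 = K1" using K1 by simp
      have "G4iSLt (add_mset (Var p) \<Gamma>) \<phi>" using rrImp[OF True] .
      then have "G4iSLt \<Gamma> \<phi>" using ctr K1 by simp
      then show ?thesis by (rule cut[rotated]) (use True m_PImp PImpL G0 K1 in \<open>simp_all add: add_mset_commute\<close>)
    next
      case False
      obtain K where K: "K1 = add_mset (Imp (Var p) \<phi>) K" "\<Gamma>0 = add_mset A K"
        using ex_split[OF K1(2)[symmetric] False] by auto
      have l: "G4iSLt (add_mset \<phi> (add_mset (Var p) K)) A" using inv_PImp[of p \<phi> "add_mset (Var p) K" A] LD K K1
        by (simp add: add_mset_commute)
      have "G4iSLt (add_mset (Var p) (add_mset \<phi> K)) \<chi>"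
        by (rule cut[of A]) (use K K1 Kc_mono[OF d_PImpL] PImpL l in \<open>simp_all add: add_mset_commute\<close>)
      from G4iSLt.PImpL[OF this] show ?thesis using K K1 by simp
    qed
  next
    case (ImpR \<phi> \<psi>)
    have "G4iSLt (add_mset \<phi> \<Gamma>) \<psi>"
      by (rule cut[OF _ wk[OF LD]]) (use ImpR Kc_mono[OF d_ImpR] in \<open>simp_all add: add_mset_commute\<close>)
    then show ?thesis using ImpR by (simp add: G4iSLt.ImpR)
  next
    case (BoxImpL \<Phi> \<Gamma>0 \<psi> \<phi>)
    let ?X = "Imp (Box \<phi>) \<psi>"
    have eq: "add_mset A \<Gamma> = add_mset ?X (\<Phi> + image_mset Box \<Gamma>0)" using BoxImpL(1) by simp
    show ?thesis
    proof (cases "A = ?X")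
      case True
      then have G: "\<Gamma> = \<Phi> + image_mset Box \<Gamma>0" using eq by simp
      have lp: "G4iSLt (add_mset (Box \<phi>) \<Gamma>) \<psi>" using rrImp[OF True] .
      have l1: "G4iSLt (\<Phi> + \<Gamma>0 + {#Box \<phi>#}) \<psi>"
        using bu_mset[of \<Gamma>0 "add_mset (Box \<phi>) \<Phi>" \<psi>] lp G by (simp add: ac_simps)
      have "G4iSLt (\<Phi> + \<Gamma>0 + {#Box \<phi>#}) \<phi>"
        by (rule cut[OF _ l1]) (use True m_BI1[of \<psi> \<Phi> \<Gamma>0 \<phi> \<chi>] BoxImpL in \<open>simp_all add: G add_mset_commute\<close>)
      from G4iSLt.SLtR[OF BoxImpL(2) this] have bx: "G4iSLt \<Gamma> (Box \<phi>)" using G by simp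
      have "G4iSLt \<Gamma> \<psi>" by (rule cut[OF _ bx]) (use True m_BI2 lp in simp_all)
      then show ?thesis by (rule cut[rotated]) (use True m_BI3 BoxImpL G in \<open>simp_all add: add_mset_commute\<close>)
    next
      case False
      have mem: "A \<in># \<Phi> + image_mset Box \<Gamma>0" using eq False
        by (metis insert_noteq_member)
      have G: "\<Gamma> = add_mset ?X (\<Phi> + image_mset Box \<Gamma>0 - {#A#})" using eq False
        by (metis add_eq_conv_diff)
      show ?thesis
      proof (cases "is_box A")
        case False
        then have "A \<in># \<Phi>" using mem by auto
        then obtain \<Phi>0 where P: "\<Phi> = add_mset A \<Phi>0" by (metis multi_member_split)
        have G': "\<Gamma> = add_mset ?X (\<Phi>0 + image_mset Box \<Gamma>0)" using G P by simp
        have nb0: "no_box \<Phi>0" using BoxImpL(2) P by simp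
        have l2: "G4iSLt (add_mset \<psi> (\<Phi>0 + image_mset Box \<Gamma>0)) A" using inv_BoxImp2 LD G' by simp
        have l1: "G4iSLt (\<Phi>0 + \<Gamma>0 + {#\<psi>, Box \<phi>#}) A"
          using wk[OF bu_mset[of \<Gamma>0 "add_mset \<psi> \<Phi>0" A], of "Box \<phi>"] l2 by (simp add: ac_simps add_mset_commute)
        have c2: "G4iSLt (\<Phi>0 + image_mset Box \<Gamma>0 + {#\<psi>#}) \<chi>"
          by (rule cut[of A]) (use l2 BoxImpL P G' Kc_mono[OF d_BoxImpL2[of \<Phi>0 "image_mset Box \<Gamma>0" \<psi> \<chi> \<phi>]] in \<open>simp_all add: ac_simps add_mset_commute\<close>)
        have c1: "G4iSLt (\<Phi>0 + \<Gamma>0 + {#\<psi>, Box \<phi>#}) \<phi>"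
          by (rule cut[OF _ l1]) (use BoxImpL P G' Kc_mono[OF d_BoxImpL1[of \<Phi>0 \<Gamma>0 \<psi> \<phi> \<chi>]] in \<open>simp_all add: ac_simps add_mset_commute\<close>)
        from G4iSLt.BoxImpL[OF nb0 c1 c2] show ?thesis using G' BoxImpL by (simp add: ac_simps)
      next
        case True
        then obtain c where c: "A = Box c" by (auto simp: is_box_iff)
        have "c \<in># \<Gamma>0" using mem c BoxImpL(2) by (auto simp: no_box_def)
        then obtain D0 where D0: "\<Gamma>0 = add_mset c D0" by (metis multi_member_split)
        have G': "\<Gamma> = add_mset ?X \<Phi> + image_mset Box D0" using G D0 c by simp
        obtain P D where PD: "no_box P" "\<Gamma> = P + image_mset Box D" "G4iSLt (P + D + {#Box c#}) c"
          using rrBox[OF c] by blast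
        have nbX: "no_box (add_mset ?X \<Phi>)" using BoxImpL(2) by simp
        have "P + image_mset Box D = add_mset ?X \<Phi> + image_mset Box D0" using PD(2) G' by simp
        then have u: "P = add_mset ?X \<Phi> \<and> D = D0" using decomp_unique[OF PD(1) nbX] by blast
        have a: "G4iSLt (add_mset ?X (\<Phi> + D0 + {#Box c#})) c" using PD(3) u by (simp add: add_mset_commute)
        have a': "G4iSLt (add_mset \<psi> (\<Phi> + D0 + {#Box c#})) c" using inv_BoxImp2[OF a] .
        have l2: "G4iSLt (add_mset \<psi> (\<Phi> + image_mset Box D0)) (Box c)" using inv_BoxImp2[of \<phi> \<psi>] LD G' c
          by (simp add: ac_simps)
        have c2: "G4iSLt (\<Phi> + image_mset Box D0 + {#\<psi>#}) \<chi>"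
          by (rule cut[of "Box c"]) (use l2 BoxImpL D0 c G' Kc_mono[OF d_BoxImpL2[of \<Phi> "image_mset Box D0" \<psi> \<chi> \<phi>]] in \<open>simp_all add: ac_simps add_mset_commute\<close>)
        have y1: "G4iSLt (\<Phi> + D0 + {#\<psi>, Box \<phi>, Box c#}) \<phi>"
          by (rule cut[of c]) (use wk[OF a', of "Box \<phi>"] wk[OF BoxImpL(3), of "Box c"] D0 c G' m_B1[of c \<Phi> D0 \<psi> \<phi> \<chi>] in \<open>simp_all add: ac_simps add_mset_commute\<close>)
        have l1: "G4iSLt (\<Phi> + D0 + {#\<psi>, Box \<phi>#}) (Box c)"
          using wk[OF bu_mset[of D0 "add_mset \<psi> \<Phi>" "Box c"], of "Box \<phi>"] l2 by (simp add: ac_simps add_mset_commute)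
        have c1: "G4iSLt (\<Phi> + D0 + {#\<psi>, Box \<phi>#}) \<phi>"
          by (rule cut[OF _ l1]) (use y1 c G' BoxImpL Kc_mono[OF d_BoxImpL1[of \<Phi> D0 \<psi> \<phi> \<chi>]] in \<open>simp_all add: ac_simps add_mset_commute\<close>)
        from G4iSLt.BoxImpL[OF BoxImpL(2) c1 c2] show ?thesis using G' BoxImpL by (simp add: ac_simps)
      qed
    qed
  next
    case (SLtR \<Phi> \<Gamma>0 \<phi>)
    show ?thesis
    proof (cases "is_box A")
      case False
      from dec_nb[OF SLtR(3) SLtR(1)[symmetric] False] have "A \<in># \<Phi>" by simp
      then obtain \<Phi>0 where P: "\<Phi> = add_mset A \<Phi>0" by (metis multi_member_split)
      have G: "\<Gamma> = \<Phi>0 + image_mset Box \<Gamma>0" using SLtR(1) P by simp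
      have nb0: "no_box \<Phi>0" using SLtR(3) P by simp
      have l: "G4iSLt (\<Phi>0 + \<Gamma>0 + {#Box \<phi>#}) A"
        using wk[OF bu_mset[of \<Gamma>0 \<Phi>0 A], of "Box \<phi>"] LD G by (simp add: ac_simps)
      have "G4iSLt (\<Phi>0 + \<Gamma>0 + {#Box \<phi>#}) \<phi>"
        by (rule cut[OF _ l]) (use SLtR P G Kc_mono[OF d_SLtR[of \<Phi>0 \<Gamma>0 \<phi>]] in \<open>simp_all add: ac_simps add_mset_commute\<close>)
      from G4iSLt.SLtR[OF nb0 this] show ?thesis using G SLtR by simp
    next
      case True
      then obtain c where c: "A = Box c" by (auto simp: is_box_iff)
      from dec_b[OF SLtR(3) SLtR(1)[symmetric, unfolded c]] obtain D0 where D0: "\<Gamma>0 = add_mset c D0"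
        and G: "\<Gamma> = \<Phi> + image_mset Box D0"
        by (metis multi_member_split add_mset_remove_trivial)
      obtain P D where PD: "no_box P" "\<Gamma> = P + image_mset Box D" "G4iSLt (P + D + {#Box c#}) c"
        using rrBox[OF c] by blast
      have "P + image_mset Box D = \<Phi> + image_mset Box D0" using PD(2) G by simp
      then have u: "P = \<Phi> \<and> D = D0" using decomp_unique[OF PD(1) SLtR(3)] by blast
      have y1: "G4iSLt (\<Phi> + D0 + {#Box \<phi>, Box c#}) \<phi>"
        by (rule cut[of c]) (use wk[OF PD(3), of "Box \<phi>"] wk[OF SLtR(4), of "Box c"] u D0 c G SLtR m_S1[of c \<Phi> D0 \<phi>] in \<open>simp_all add: ac_simps add_mset_commute\<close>)
      have l: "G4iSLt (\<Phi> + D0 + {#Box \<phi>#}) (Box c)"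
        using wk[OF bu_mset[of D0 \<Phi> "Box c"], of "Box \<phi>"] LD G c by (simp add: ac_simps)
      have "G4iSLt (\<Phi> + D0 + {#Box \<phi>#}) \<phi>"
        by (rule cut[OF _ l]) (use y1 c G SLtR Kc_mono[OF d_SLtR[of \<Phi> D0 \<phi>]] in \<open>simp_all add: ac_simps add_mset_commute\<close>)
      from G4iSLt.SLtR[OF SLtR(3) this] show ?thesis using G SLtR by simp
    qed
  next
    case (AndImpL \<phi> \<psi> \<chi>0 \<Gamma>0)
    show ?thesis
    proof (cases "A = Imp (And \<phi> \<psi>) \<chi>0")
      case True
      then have G0: "\<Gamma>0 = \<Gamma>" using AndImpL(1) by simp
      have "G4iSLt (add_mset \<phi> (add_mset \<psi> \<Gamma>)) \<chi>0" using inv_And[OF rrImp[OF True]] .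
      then have "G4iSLt (add_mset \<psi> (add_mset \<phi> \<Gamma>)) \<chi>0" by (simp add: add_mset_commute)
      then have l: "G4iSLt \<Gamma> (Imp \<phi> (Imp \<psi> \<chi>0))" by (intro G4iSLt.ImpR)
      show ?thesis by (rule cut[OF _ l]) (use True m_AndImp AndImpL G0 in simp_all)
    next
      case False
      obtain K where K: "\<Gamma> = add_mset (Imp (And \<phi> \<psi>) \<chi>0) K" "\<Gamma>0 = add_mset A K"
        using ex_split[OF AndImpL(1) False] by auto
      have l: "G4iSLt (add_mset (Imp \<phi> (Imp \<psi> \<chi>0)) K) A" using inv_AndImp LD K by simp
      have "G4iSLt (add_mset (Imp \<phi> (Imp \<psi> \<chi>0)) K) \<chi>"
        by (rule cut[OF _ l]) (use K Kc_mono[OF d_AndImpL] AndImpL in \<open>simp_all add: add_mset_commute\<close>)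
      from G4iSLt.AndImpL[OF this] show ?thesis using K by simp
    qed
  next
    case (OrImpL \<phi> \<chi>0 \<psi> \<Gamma>0)
    show ?thesis
    proof (cases "A = Imp (Or \<phi> \<psi>) \<chi>0")
      case True
      then have G0: "\<Gamma>0 = \<Gamma>" using OrImpL(1) by simp
      have l1: "G4iSLt \<Gamma> (Imp \<phi> \<chi>0)" using inv_Or1[OF rrImp[OF True]] by (intro G4iSLt.ImpR)
      have l2: "G4iSLt \<Gamma> (Imp \<psi> \<chi>0)" using inv_Or2[OF rrImp[OF True]] by (intro G4iSLt.ImpR)
      have "G4iSLt (add_mset (Imp \<psi> \<chi>0) \<Gamma>) \<chi>"
        by (rule cut[OF _ wk[OF l1]]) (use True m_OrImp1 OrImpL G0 in simp_all)
      then show ?thesis by (rule cut[OF _ l2, rotated]) (use True m_OrImp2 in simp)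
    next
      case False
      obtain K where K: "\<Gamma> = add_mset (Imp (Or \<phi> \<psi>) \<chi>0) K" "\<Gamma>0 = add_mset A K"
        using ex_split[OF OrImpL(1) False] by auto
      have l: "G4iSLt (add_mset (Imp \<phi> \<chi>0) (add_mset (Imp \<psi> \<chi>0) K)) A" using inv_OrImp LD K by simp
      have "G4iSLt (add_mset (Imp \<phi> \<chi>0) (add_mset (Imp \<psi> \<chi>0) K)) \<chi>"
        by (rule cut[OF _ l]) (use K Kc_mono[OF d_OrImpL] OrImpL in \<open>simp_all add: add_mset_commute\<close>)
      from G4iSLt.OrImpL[OF this] show ?thesis using K by simp
    qed
  next
    case (ImpImpL \<psi> \<chi>0 \<Gamma>0 \<phi>)
    let ?F = "Imp (Imp \<phi> \<psi>) \<chi>0"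
    show ?thesis
    proof (cases "A = ?F")
      case True
      then have G0: "\<Gamma>0 = \<Gamma>" using ImpImpL(1) by simp
      have lp: "G4iSLt (add_mset (Imp \<phi> \<psi>) \<Gamma>) \<chi>0" using rrImp[OF True] .
      have i1: "G4iSLt (add_mset \<psi> \<Gamma>) (Imp \<phi> \<psi>)"
        using ident[of \<psi> "add_mset \<phi> \<Gamma>"] by (intro G4iSLt.ImpR) (simp add: add_mset_commute)
      have "G4iSLt (add_mset \<psi> \<Gamma>) \<chi>0"
        by (rule cut[OF _ i1]) (use True m_II1 wk[OF lp, of \<psi>] in \<open>simp_all add: add_mset_commute\<close>)
      then have s2: "G4iSLt \<Gamma> (Imp \<psi> \<chi>0)" by (rule G4iSLt.ImpR)
      have s3: "G4iSLt \<Gamma> (Imp \<phi> \<psi>)"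
        by (rule cut[OF _ s2]) (use True m_II2 ImpImpL G0 in simp_all)
      have s4: "G4iSLt \<Gamma> \<chi>0"
        by (rule cut[OF _ s3]) (use True m_II3 lp in simp_all)
      show ?thesis by (rule cut[OF _ s4]) (use True m_II4 ImpImpL G0 in simp_all)
    next
      case False
      obtain K where K: "\<Gamma> = add_mset ?F K" "\<Gamma>0 = add_mset A K"
        using ex_split[OF ImpImpL(1) False] by auto
      have l2: "G4iSLt (add_mset \<chi>0 K) A" using inv_ImpImp2 LD K by simp
      have c2: "G4iSLt (add_mset \<chi>0 K) \<chi>"
        by (rule cut[OF _ l2]) (use K Kc_mono[OF d_ImpImpL2] ImpImpL in \<open>simp_all add: add_mset_commute\<close>)
      have LL: "G4iSLt ({#\<phi>, Imp \<psi> \<chi>0#} + K) A"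
      proof (rule frame_aux[where X="?F" and Y="{#\<phi>, Imp \<psi> \<chi>0#}" and M="mu (add_mset ?F K) A"
            and G="add_mset ?F K", OF _ _ _ _ _ _ _ _ _ _ _ refl order_refl])
        show "G4iSLt (add_mset ?F K) A" using LD K by simp
      next
        fix a b d \<Gamma>1 c'
        assume F: "?F = Imp (Imp a b) d" and bd: "mu (add_mset ?F \<Gamma>1) c' \<le> mu (add_mset ?F K) A"
          and q1: "G4iSLt (add_mset (Imp b d) \<Gamma>1) (Imp a b)" and q2: "G4iSLt (add_mset d \<Gamma>1) c'"
        have abd: "a = \<phi>" "b = \<psi>" "d = \<chi>0" using F by auto
        have r1: "G4iSLt (add_mset a (add_mset (Imp b d) \<Gamma>1)) b" using inv_ImpR[OF q1] .
        have "G4iSLt (add_mset d (add_mset b (add_mset a \<Gamma>1))) c'" using wk[OF wk[OF q2]] by (simp add: add_mset_commute)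
        from mpl[OF this] have r2: "G4iSLt (add_mset b (add_mset a (add_mset (Imp b d) \<Gamma>1))) c'"
          by (simp add: add_mset_commute)
        have "G4iSLt (add_mset a (add_mset (Imp b d) \<Gamma>1)) c'"
          by (rule cut[OF _ r1 r2]) (use L_meas[of a b d \<Gamma>1 c' K A \<chi>] bd abd K in simp)
        then show "G4iSLt ({#\<phi>, Imp \<psi> \<chi>0#} + \<Gamma>1) c'" using abd by simp
      qed auto
      have r: "G4iSLt (add_mset \<phi> (add_mset (Imp \<psi> \<chi>0) (add_mset A K))) \<psi>"
        using inv_ImpR[of _ \<phi> \<psi>] ImpImpL(2) K by simp
      have "G4iSLt (add_mset \<phi> (add_mset (Imp \<psi> \<chi>0) K)) \<psi>"
        by (rule cut[of A]) (use LL r K Kc_mono[OF d_L] ImpImpL in \<open>simp_all add: add_mset_commute\<close>)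
      then have c1: "G4iSLt (add_mset (Imp \<psi> \<chi>0) K) (Imp \<phi> \<psi>)" by (rule G4iSLt.ImpR)
      from G4iSLt.ImpImpL[OF c1 c2] show ?thesis using K ImpImpL by simp
    qed
  qed
qed


lemma cut_step:
  assumes IH: "cutP (Kc A \<Gamma> \<chi>)"
    and LD: "G4iSLt \<Gamma> A" and RD: "G4iSLt (add_mset A \<Gamma>) \<chi>"
  shows "G4iSLt \<Gamma> \<chi>"
proof -
  have cut: "\<And>A' \<Gamma>' \<chi>'. Kc A' \<Gamma>' \<chi>' < Kc A \<Gamma> \<chi> \<Longrightarrow> G4iSLt \<Gamma>' A' \<Longrightarrow> G4iSLt (add_mset A' \<Gamma>') \<chi>' \<Longrightarrow> G4iSLt \<Gamma>' \<chi>'"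
    using IH unfolding cutP_def by blast
  show ?thesis using LD
  proof (cases rule: G4iSLt.cases)
    case (BotL \<Gamma>0)
    then show ?thesis by (simp add: G4iSLt.BotL)
  next
    case (IdP p \<Gamma>0)
    then show ?thesis using RD ctr by simp
  next
    case (AndL \<phi> \<psi> \<Gamma>0)
    have r: "G4iSLt (add_mset \<phi> (add_mset \<psi> (add_mset A \<Gamma>0))) \<chi>"
      using inv_And[of \<phi> \<psi> "add_mset A \<Gamma>0" \<chi>] RD AndL by (simp add: add_mset_commute)
    have "G4iSLt (add_mset \<phi> (add_mset \<psi> \<Gamma>0)) \<chi>"
      by (rule cut[OF _ AndL(2)]) (use r AndL Kc_mono[OF d_AndL] in \<open>simp_all add: add_mset_commute\<close>)
    from G4iSLt.AndL[OF this] show ?thesis using AndL by simp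
  next
    case (AndR \<phi> \<psi>)
    show ?thesis by (rule cut_right[OF IH LD RD]) (use AndR in auto)
  next
    case (OrL \<phi> \<Gamma>0 \<psi>)
    have r1: "G4iSLt (add_mset \<phi> (add_mset A \<Gamma>0)) \<chi>"
      using inv_Or1[of \<phi> \<psi> "add_mset A \<Gamma>0" \<chi>] RD OrL by (simp add: add_mset_commute)
    have r2: "G4iSLt (add_mset \<psi> (add_mset A \<Gamma>0)) \<chi>"
      using inv_Or2[of \<phi> \<psi> "add_mset A \<Gamma>0" \<chi>] RD OrL by (simp add: add_mset_commute)
    have "G4iSLt (add_mset \<phi> \<Gamma>0) \<chi>"
      by (rule cut[OF _ OrL(2)]) (use r1 OrL Kc_mono[OF d_OrL1] in \<open>simp_all add: add_mset_commute\<close>)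
    moreover have "G4iSLt (add_mset \<psi> \<Gamma>0) \<chi>"
      by (rule cut[OF _ OrL(3)]) (use r2 OrL Kc_mono[OF d_OrL2] in \<open>simp_all add: add_mset_commute\<close>)
    ultimately show ?thesis using OrL by (simp add: G4iSLt.OrL)
  next
    case (OrR1 \<phi> \<psi>)
    show ?thesis by (rule cut_right[OF IH LD RD]) (use OrR1 in auto)
  next
    case (OrR2 \<psi> \<phi>)
    show ?thesis by (rule cut_right[OF IH LD RD]) (use OrR2 in auto)
  next
    case (PImpL p \<phi> \<Gamma>0)
    have r: "G4iSLt (add_mset \<phi> (add_mset A (add_mset (Var p) \<Gamma>0))) \<chi>"
      using inv_PImp[of p \<phi> "add_mset A (add_mset (Var p) \<Gamma>0)" \<chi>] RD PImpL by (simp add: add_mset_commute)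
    have "G4iSLt (add_mset (Var p) (add_mset \<phi> \<Gamma>0)) \<chi>"
      by (rule cut[OF _ PImpL(2)]) (use r PImpL Kc_mono[OF d_PImpL] in \<open>simp_all add: add_mset_commute\<close>)
    from G4iSLt.PImpL[OF this] show ?thesis using PImpL by simp
  next
    case (ImpR \<phi> \<psi>)
    show ?thesis by (rule cut_right[OF IH LD RD]) (use ImpR in auto)
  next
    case (BoxImpL \<Phi> \<Gamma>0 \<psi> \<phi>)
    have r: "G4iSLt (add_mset \<psi> (add_mset A (\<Phi> + image_mset Box \<Gamma>0))) \<chi>"
      using inv_BoxImp2[of \<phi> \<psi> "add_mset A (\<Phi> + image_mset Box \<Gamma>0)" \<chi>] RD BoxImpL by (simp add: add_mset_commute)
    have "G4iSLt (\<Phi> + image_mset Box \<Gamma>0 + {#\<psi>#}) \<chi>"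
      by (rule cut[OF _ BoxImpL(4)]) (use r BoxImpL Kc_mono[OF d_BoxImpL2[of \<Phi> "image_mset Box \<Gamma>0" \<psi> \<chi> \<phi>]] in \<open>simp_all add: add_mset_commute\<close>)
    from G4iSLt.BoxImpL[OF BoxImpL(2) BoxImpL(3) this] show ?thesis using BoxImpL by simp
  next
    case (SLtR \<Phi> \<Gamma>0 \<phi>)
    show ?thesis by (rule cut_right[OF IH LD RD]) (use SLtR in auto)
  next
    case (AndImpL \<phi> \<psi> \<chi>0 \<Gamma>0)
    have r: "G4iSLt (add_mset (Imp \<phi> (Imp \<psi> \<chi>0)) (add_mset A \<Gamma>0)) \<chi>"
      using inv_AndImp[of \<phi> \<psi> \<chi>0 "add_mset A \<Gamma>0" \<chi>] RD AndImpL by (simp add: add_mset_commute)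
    have "G4iSLt (add_mset (Imp \<phi> (Imp \<psi> \<chi>0)) \<Gamma>0) \<chi>"
      by (rule cut[OF _ AndImpL(2)]) (use r AndImpL Kc_mono[OF d_AndImpL] in \<open>simp_all add: add_mset_commute\<close>)
    from G4iSLt.AndImpL[OF this] show ?thesis using AndImpL by simp
  next
    case (OrImpL \<phi> \<chi>0 \<psi> \<Gamma>0)
    have r: "G4iSLt (add_mset (Imp \<phi> \<chi>0) (add_mset (Imp \<psi> \<chi>0) (add_mset A \<Gamma>0))) \<chi>"
      using inv_OrImp[of \<phi> \<psi> \<chi>0 "add_mset A \<Gamma>0" \<chi>] RD OrImpL by (simp add: add_mset_commute)
    have "G4iSLt (add_mset (Imp \<phi> \<chi>0) (add_mset (Imp \<psi> \<chi>0) \<Gamma>0)) \<chi>"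
      by (rule cut[OF _ OrImpL(2)]) (use r OrImpL Kc_mono[OF d_OrImpL] in \<open>simp_all add: add_mset_commute\<close>)
    from G4iSLt.OrImpL[OF this] show ?thesis using OrImpL by simp
  next
    case (ImpImpL \<psi> \<chi>0 \<Gamma>0 \<phi>)
    have r: "G4iSLt (add_mset \<chi>0 (add_mset A \<Gamma>0)) \<chi>"
      using inv_ImpImp2[of \<phi> \<psi> \<chi>0 "add_mset A \<Gamma>0" \<chi>] RD ImpImpL by (simp add: add_mset_commute)
    have "G4iSLt (add_mset \<chi>0 \<Gamma>0) \<chi>"
      by (rule cut[OF _ ImpImpL(3)]) (use r ImpImpL Kc_mono[OF d_ImpImpL2] in \<open>simp_all add: add_mset_commute\<close>)
    from G4iSLt.ImpImpL[OF ImpImpL(2) this] show ?thesis using ImpImpL by simp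
  qed
qed

lemma cut_all: "Kc A \<Gamma> \<chi> = M \<Longrightarrow> G4iSLt \<Gamma> A \<Longrightarrow> G4iSLt (add_mset A \<Gamma>) \<chi> \<Longrightarrow> G4iSLt \<Gamma> \<chi>"
proof (induction M arbitrary: A \<Gamma> \<chi> rule: less_induct)
  case (less M)
  have "cutP (Kc A \<Gamma> \<chi>)" unfolding cutP_def using less by blast
  then show ?case using cut_step less.prems by blast
qed

theorem theorem2:
  fixes \<Gamma> :: "form multiset" and \<phi> \<chi> :: form
  assumes "G4iSLt \<Gamma> \<phi>"
    and "G4iSLt (add_mset \<phi> \<Gamma>) \<chi>"
  shows "G4iSLt \<Gamma> \<chi>"
  using cut_all[OF refl assms] .


end
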